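(* Let $\alpha=(\alpha_k)_{k\in\mathbb{N}}\in\ell^2$ and for $n\in\mathbb{N}$ let $J_n=\sup_{m\ge n}(m+1-n)^{1/2}\big(\sum_{k=m}^\infty|\alpha_k|^2\big)^{1/2}$. Then $$\lim_{n\to\infty}J_n\le\|R_\alpha\|_e\le2\sqrt2\lim_{n\to\infty}J_n.$$ In particular, $R_\alpha$ is compact if and only if $\lim_{n\to\infty}J_n=0$.
   Context: $\mathbb{N}=\{0,1,2,\dots\}$; $\ell^2$ is the space of square-summable functions $\mathbb{N}\to\mathbb{C}$. The Rhaly operator is $(R_\alpha f)(k)=\alpha_k\sum_{j=0}^k f(j)$. The sequence $(J_n)$ is nonincreasing, so its limit exists in $[0,\infty]$. The essential norm is $\|T\|_e=\inf\{\|T-P\|: P \text{ a finite-rank operator on }\ell^2\}$, where $\|\cdot\|$ is the operator norm (possibly $+\infty$). *)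

theory Defs
  imports "HOL-Analysis.Analysis"
begin

definition l2 :: "(nat \<Rightarrow> complex) set" where
  "l2 = {f. summable (\<lambda>k. (cmod (f k))\<^sup>2)}"

definition l2norm :: "(nat \<Rightarrow> complex) \<Rightarrow> real" where
  "l2norm f = sqrt (\<Sum>k. (cmod (f k))\<^sup>2)"

definition l2enorm :: "(nat \<Rightarrow> complex) \<Rightarrow> ennreal" where
  "l2enorm g = (if g \<in> l2 then ennreal (l2norm g) else \<infinity>)"

definition opnorm :: "((nat \<Rightarrow> complex) \<Rightarrow> (nat \<Rightarrow> complex)) \<Rightarrow> ennreal" where
  "opnorm T = (SUP f \<in> {f \<in> l2. l2norm f \<le> 1}. l2enorm (T f))"

definition finite_rank_op :: "((nat \<Rightarrow> complex) \<Rightarrow> (nat \<Rightarrow> complex)) \<Rightarrow> bool" where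
  "finite_rank_op P \<longleftrightarrow>
     (\<forall>f\<in>l2. P f \<in> l2) \<and>
     (\<forall>f\<in>l2. \<forall>g\<in>l2. P (\<lambda>k. f k + g k) = (\<lambda>k. P f k + P g k)) \<and>
     (\<forall>f\<in>l2. \<forall>c::complex. P (\<lambda>k. c * f k) = (\<lambda>k. c * P f k)) \<and>
     (\<exists>C. \<forall>f\<in>l2. l2norm (P f) \<le> C * l2norm f) \<and>
     (\<exists>(n::nat) (v :: nat \<Rightarrow> nat \<Rightarrow> complex) (\<phi> :: nat \<Rightarrow> (nat \<Rightarrow> complex) \<Rightarrow> complex).
        (\<forall>i<n. v i \<in> l2) \<and> (\<forall>f\<in>l2. P f = (\<lambda>k. \<Sum>i<n. \<phi> i f * v i k)))"

definition ess_norm :: "((nat \<Rightarrow> complex) \<Rightarrow> (nat \<Rightarrow> complex)) \<Rightarrow> ennreal" where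
  "ess_norm T = (INF P \<in> {P. finite_rank_op P}. opnorm (\<lambda>f k. T f k - P f k))"

definition compact_op :: "((nat \<Rightarrow> complex) \<Rightarrow> (nat \<Rightarrow> complex)) \<Rightarrow> bool" where
  "compact_op T \<longleftrightarrow>
     (\<forall>f\<in>l2. T f \<in> l2) \<and>
     (\<forall>f\<in>l2. \<forall>g\<in>l2. T (\<lambda>k. f k + g k) = (\<lambda>k. T f k + T g k)) \<and>
     (\<forall>f\<in>l2. \<forall>c::complex. T (\<lambda>k. c * f k) = (\<lambda>k. c * T f k)) \<and>
     (\<forall>fs :: nat \<Rightarrow> nat \<Rightarrow> complex. (\<forall>n. fs n \<in> l2) \<and> (\<exists>C. \<forall>n. l2norm (fs n) \<le> C) \<longrightarrow>
        (\<exists>r g. strict_mono r \<and> g \<in> l2 \<and> (\<lambda>n. l2norm (\<lambda>k. T (fs (r n)) k - g k)) \<longlonglongrightarrow> 0))"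

definition rhaly :: "(nat \<Rightarrow> complex) \<Rightarrow> (nat \<Rightarrow> complex) \<Rightarrow> (nat \<Rightarrow> complex)" where
  "rhaly \<alpha> f = (\<lambda>k. \<alpha> k * (\<Sum>j\<le>k. f j))"

definition J :: "(nat \<Rightarrow> complex) \<Rightarrow> nat \<Rightarrow> ennreal" where
  "J \<alpha> n = (SUP m \<in> {n..}. ennreal (sqrt (real (m + 1 - n)) * sqrt (\<Sum>k. (cmod (\<alpha> (k + m)))\<^sup>2)))"

end

theory Submission
  imports Defs "HOL-Library.Diagonal_Subsequence"
begin

lemma tri_swap:
  fixes g :: "nat \<Rightarrow> nat \<Rightarrow> real"
  shows "(\<Sum>k\<le>K. \<Sum>j\<le>k. g k j) = (\<Sum>j\<le>K. \<Sum>k\<in>{j..K}. g k j)"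
proof (induction K)
  case 0 then show ?case by simp
next
  case (Suc K)
  have "(\<Sum>j\<le>Suc K. \<Sum>k\<in>{j..Suc K}. g k j)
      = (\<Sum>j\<le>K. \<Sum>k\<in>{j..Suc K}. g k j) + g (Suc K) (Suc K)" by simp
  also have "(\<Sum>j\<le>K. \<Sum>k\<in>{j..Suc K}. g k j) = (\<Sum>j\<le>K. (\<Sum>k\<in>{j..K}. g k j) + g (Suc K) j)"
    by (intro sum.cong refl) (simp add: atLeastAtMostSuc_conv)
  finally show ?case using Suc by (simp add: sum.distrib)
qed

lemma sum_inv_sqrt:
  "(\<Sum>j\<le>k. 1 / sqrt (real j + 1)) \<le> 2 * sqrt (real k + 1)"
proof (induction k)
  case 0 then show ?case by simp
next
  case (Suc k)
  have key: "1 / sqrt (real k + 2) \<le> 2 * sqrt (real k + 2) - 2 * sqrt (real k + 1)"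
  proof -
    define a where "a = sqrt (real k + 1)"
    define b where "b = sqrt (real k + 2)"
    have a0: "a > 0" and ab: "a \<le> b" unfolding a_def b_def by auto
    have b2: "b * b = real k + 2" and a2: "a * a = real k + 1" unfolding a_def b_def by simp_all
    have "1 = b*b - a*a" using a2 b2 by simp
    also have "\<dots> = (b - a) * (b + a)" by (simp add: algebra_simps)
    also have "\<dots> \<le> (b - a) * (2 * b)" using ab by (intro mult_left_mono) auto
    finally have "1 \<le> 2 * b * (b - a)" by (simp add: algebra_simps)
    then show ?thesis unfolding a_def[symmetric] b_def[symmetric] using a0 ab
      by (simp add: field_simps)
  qed
  have "(\<Sum>j\<le>Suc k. 1 / sqrt (real j + 1)) = (\<Sum>j\<le>k. 1 / sqrt (real j + 1)) + 1 / sqrt (real k + 2)"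
    by (simp add: add.commute)
  also have "\<dots> \<le> 2 * sqrt (real k + 1) + (2 * sqrt (real k + 2) - 2 * sqrt (real k + 1))"
    using Suc key by linarith
  finally show ?case by (simp add: add.commute)
qed

lemma cs_weighted:
  fixes a :: "nat \<Rightarrow> real"
  shows "(\<Sum>j\<le>k. a j)\<^sup>2 \<le> 2 * sqrt (real k + 1) * (\<Sum>j\<le>k. (a j)\<^sup>2 * sqrt (real j + 1))"
proof -
  define q where "q j = sqrt (sqrt (real j + 1))" for j
  have q0: "q j > 0" for j unfolding q_def by simp
  have qq: "(q j)\<^sup>2 = sqrt (real j + 1)" for j unfolding q_def by simp
  have "(\<Sum>j\<le>k. a j) = (\<Sum>j\<le>k. (1 / q j) * (a j * q j))"
    using q0 by (intro sum.cong refl) (simp add: less_imp_neq[symmetric])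
  then have "(\<Sum>j\<le>k. a j)\<^sup>2 \<le> (\<Sum>j\<le>k. (1 / q j)\<^sup>2) * (\<Sum>j\<le>k. (a j * q j)\<^sup>2)"
    using Cauchy_Schwarz_ineq_sum by metis
  also have "\<dots> = (\<Sum>j\<le>k. 1 / sqrt (real j + 1)) * (\<Sum>j\<le>k. (a j)\<^sup>2 * sqrt (real j + 1))"
    by (simp add: power_divide power_mult_distrib qq)
  also have "\<dots> \<le> 2 * sqrt (real k + 1) * (\<Sum>j\<le>k. (a j)\<^sup>2 * sqrt (real j + 1))"
    by (intro mult_right_mono sum_inv_sqrt sum_nonneg) auto
  finally show ?thesis .
qed

lemma abel_bound:
  fixes w :: "nat \<Rightarrow> real"
  assumes w0: "\<And>k. w k \<ge> 0" and B0: "B \<ge> 0"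
    and hyp: "\<And>m. m \<le> K \<Longrightarrow> (real m + 1) * (\<Sum>k\<in>{m..K}. w k) \<le> B"
    and jK: "j \<le> K"
  shows "(\<Sum>k\<in>{j..K}. w k * sqrt (real k + 1)) \<le> sqrt (real j + 1) * (\<Sum>k\<in>{j..K}. w k) + B / sqrt (real j + 1)"
  using jK
proof (induction j rule: inc_induct)
  case base
  then show ?case using B0 by simp
next
  case (step n)
  define T where "T = (\<Sum>k\<in>{Suc n..K}. w k)"
  have T0: "T \<ge> 0" unfolding T_def using w0 by (simp add: sum_nonneg)
  have TB: "(real n + 2) * T \<le> B" using hyp[of "Suc n"] step(2) unfolding T_def by (simp add: add.commute)
  have split1: "{n..K} = insert n {Suc n..K}" using step(2) by auto
  have e1: "(\<Sum>k\<in>{n..K}. w k * sqrt (real k + 1)) = w n * sqrt (real n + 1) + (\<Sum>k\<in>{Suc n..K}. w k * sqrt (real k + 1))"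
    unfolding split1 by simp
  have e2: "(\<Sum>k\<in>{n..K}. w k) = w n + T" unfolding split1 T_def by simp
  define a where "a = sqrt (real n + 1)"
  define b where "b = sqrt (real n + 2)"
  have a0: "a > 0" and ab: "a \<le> b" unfolding a_def b_def by auto
  have b2: "b * b = real n + 2" unfolding b_def by simp
  have ih: "(\<Sum>k\<in>{Suc n..K}. w k * sqrt (real k + 1)) \<le> b * T + B / b"
    using step(3) unfolding T_def b_def by (simp add: add.commute)
  have key: "(b - a) * T \<le> B / a - B / b"
  proof -
    have "(b - a) * T * (b * b) \<le> (b - a) * B" using TB b2 ab
      by (metis mult.commute mult.left_commute mult_left_mono diff_ge_0_iff_ge)
    then have "(b - a) * T \<le> (b - a) * B / (b * b)" using a0 ab
      by (simp add: field_simps)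
    also have "\<dots> \<le> (b - a) * B / (a * b)" using a0 ab B0
      by (intro divide_left_mono mult_right_mono mult_nonneg_nonneg) auto
    also have "\<dots> = B / a - B / b" using a0 ab by (simp add: field_simps)
    finally show ?thesis .
  qed
  have "(\<Sum>k\<in>{n..K}. w k * sqrt (real k + 1)) \<le> w n * a + b * T + B / b"
    using e1 ih unfolding a_def by linarith
  also have "\<dots> = a * (w n + T) + (b - a) * T + B / b" by (simp add: algebra_simps)
  also have "\<dots> \<le> a * (w n + T) + B / a" using key by linarith
  finally show ?case unfolding e2 a_def by simp
qed

lemma U_bound:
  fixes w :: "nat \<Rightarrow> real"
  assumes w0: "\<And>k. w k \<ge> 0" and B0: "B \<ge> 0"
    and hyp: "\<And>m. m \<le> K \<Longrightarrow> (real m + 1) * (\<Sum>k\<in>{m..K}. w k) \<le> B"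
    and jK: "j \<le> K"
  shows "(\<Sum>k\<in>{j..K}. w k * sqrt (real k + 1)) \<le> 2 * B / sqrt (real j + 1)"
proof -
  define a where "a = sqrt (real j + 1)"
  have a0: "a > 0" unfolding a_def by simp
  have aa: "a * a = real j + 1" unfolding a_def by simp
  have "a * (\<Sum>k\<in>{j..K}. w k) \<le> B / a"
    using hyp[OF jK] a0 unfolding aa[symmetric] by (simp add: field_simps)
  then show ?thesis using abel_bound[OF w0 B0 hyp jK] unfolding a_def[symmetric] by simp
qed

lemma hardy_fin:
  fixes w a :: "nat \<Rightarrow> real"
  assumes w0: "\<And>k. w k \<ge> 0" and B0: "B \<ge> 0"
    and hyp: "\<And>m. m \<le> K \<Longrightarrow> (real m + 1) * (\<Sum>k\<in>{m..K}. w k) \<le> B"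
  shows "(\<Sum>k\<le>K. w k * (\<Sum>j\<le>k. a j)\<^sup>2) \<le> 4 * B * (\<Sum>j\<le>K. (a j)\<^sup>2)"
proof -
  have "(\<Sum>k\<le>K. w k * (\<Sum>j\<le>k. a j)\<^sup>2)
      \<le> (\<Sum>k\<le>K. w k * (2 * sqrt (real k + 1) * (\<Sum>j\<le>k. (a j)\<^sup>2 * sqrt (real j + 1))))"
    by (intro sum_mono mult_left_mono cs_weighted w0)
  also have "\<dots> = 2 * (\<Sum>k\<le>K. \<Sum>j\<le>k. ((a j)\<^sup>2 * sqrt (real j + 1)) * (w k * sqrt (real k + 1)))"
    by (simp add: sum_distrib_left sum_distrib_right mult_ac)
  also have "\<dots> = 2 * (\<Sum>j\<le>K. ((a j)\<^sup>2 * sqrt (real j + 1)) * (\<Sum>k\<in>{j..K}. w k * sqrt (real k + 1)))"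
    by (simp add: tri_swap sum_distrib_left)
  also have "\<dots> \<le> 2 * (\<Sum>j\<le>K. ((a j)\<^sup>2 * sqrt (real j + 1)) * (2 * B / sqrt (real j + 1)))"
    by (intro mult_left_mono sum_mono U_bound[OF w0 B0 hyp]) auto
  also have "\<dots> = 4 * B * (\<Sum>j\<le>K. (a j)\<^sup>2)"
    by (simp add: sum_distrib_left mult_ac)
  finally show ?thesis .
qed


definition Hop :: "(nat \<Rightarrow> complex) \<Rightarrow> nat \<Rightarrow> (nat \<Rightarrow> complex) \<Rightarrow> nat \<Rightarrow> complex" where
  "Hop \<alpha> n f = (\<lambda>k. if k < n then 0 else \<alpha> k * (\<Sum>j\<in>{n..k}. f j))"

definition Fop :: "(nat \<Rightarrow> complex) \<Rightarrow> nat \<Rightarrow> (nat \<Rightarrow> complex) \<Rightarrow> nat \<Rightarrow> complex" where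
  "Fop \<alpha> n f = (\<lambda>k. if k < n then \<alpha> k * (\<Sum>j\<le>k. f j) else \<alpha> k * (\<Sum>j<n. f j))"

lemma rhaly_split: "rhaly \<alpha> f k = Fop \<alpha> n f k + Hop \<alpha> n f k"
proof (cases "k < n")
  case True then show ?thesis by (simp add: rhaly_def Fop_def Hop_def)
next
  case False
  then have "{..k} = {..<n} \<union> {n..k}" by auto
  then have "(\<Sum>j\<le>k. f j) = (\<Sum>j<n. f j) + (\<Sum>j\<in>{n..k}. f j)"
    by (simp add: sum.union_disjoint ivl_disj_int)
  with False show ?thesis by (simp add: rhaly_def Fop_def Hop_def distrib_left)
qed

lemma bounded_partials_suminf:
  fixes h :: "nat \<Rightarrow> real"
  assumes h0: "\<And>k. h k \<ge> 0" and b: "\<And>N. (\<Sum>k\<le>N. h k) \<le> B"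
  shows "summable h \<and> suminf h \<le> B"
proof -
  have s: "summable h" by (rule bounded_imp_summable[OF h0 b])
  have B0: "B \<ge> 0" using b[of 0] h0[of 0] by simp
  have "(\<Sum>k<N. h k) \<le> B" for N
  proof (cases N)
    case 0 then show ?thesis using B0 by simp
  next
    case (Suc M) then show ?thesis using b[of M] by (simp add: lessThan_Suc_atMost)
  qed
  then show ?thesis using s suminf_le_const by blast
qed

lemma l2_tail_summable: "\<alpha> \<in> l2 \<Longrightarrow> summable (\<lambda>k. (cmod (\<alpha> (k + m)))\<^sup>2)"
  unfolding l2_def using summable_iff_shift[of "\<lambda>k. (cmod (\<alpha> k))\<^sup>2" m] by simp

lemma finsum_le_tail:
  assumes "\<alpha> \<in> l2"
  shows "(\<Sum>k\<in>{m..K}. (cmod (\<alpha> k))\<^sup>2) \<le> (\<Sum>k. (cmod (\<alpha> (k + m)))\<^sup>2)"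
proof (cases "m \<le> K")
  case True
  have "(\<Sum>k\<in>{m..K}. (cmod (\<alpha> k))\<^sup>2) = (\<Sum>i\<in>{0..K-m}. (cmod (\<alpha> (i + m)))\<^sup>2)"
    using sum.shift_bounds_cl_nat_ivl[of "\<lambda>k. (cmod (\<alpha> k))\<^sup>2" 0 m "K - m"] True by simp
  also have "\<dots> \<le> (\<Sum>k. (cmod (\<alpha> (k + m)))\<^sup>2)"
    by (intro sum_le_suminf l2_tail_summable assms) auto
  finally show ?thesis .
next
  case False then show ?thesis by (simp add: suminf_nonneg l2_tail_summable assms)
qed

lemma finsum_le_l2:
  assumes "f \<in> l2" "finite A"
  shows "(\<Sum>k\<in>A. (cmod (f k))\<^sup>2) \<le> (\<Sum>k. (cmod (f k))\<^sup>2)"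
  using assms unfolding l2_def by (intro sum_le_suminf) auto

lemma J_fin:
  assumes a: "\<alpha> \<in> l2" and "J \<alpha> n \<noteq> \<infinity>" "n \<le> m"
  shows "real (m + 1 - n) * (\<Sum>k. (cmod (\<alpha> (k + m)))\<^sup>2) \<le> (enn2real (J \<alpha> n))\<^sup>2"
proof -
  define t where "t = (\<Sum>k. (cmod (\<alpha> (k + m)))\<^sup>2)"
  have t0: "t \<ge> 0" unfolding t_def by (intro suminf_nonneg l2_tail_summable a) auto
  define x where "x = sqrt (real (m + 1 - n)) * sqrt t"
  have x0: "x \<ge> 0" unfolding x_def using t0 by simp
  have "ennreal x \<le> J \<alpha> n" unfolding J_def x_def t_def using assms(3)
    by (intro SUP_upper) auto
  then have "enn2real (ennreal x) \<le> enn2real (J \<alpha> n)"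
    using assms(2) by (intro enn2real_mono) (auto simp: top.not_eq_extremum)
  then have "x \<le> enn2real (J \<alpha> n)" using x0 by simp
  then have "x\<^sup>2 \<le> (enn2real (J \<alpha> n))\<^sup>2" using x0 by (intro power_mono) auto
  moreover have "x\<^sup>2 = real (m + 1 - n) * t" unfolding x_def using t0
    by (simp add: power_mult_distrib)
  ultimately show ?thesis unfolding t_def by simp
qed

lemma Hop_bound:
  assumes a: "\<alpha> \<in> l2" and Jf: "J \<alpha> n \<noteq> \<infinity>" and f: "f \<in> l2"
  shows "Hop \<alpha> n f \<in> l2 \<and> (\<Sum>k. (cmod (Hop \<alpha> n f k))\<^sup>2) \<le> 4 * (enn2real (J \<alpha> n))\<^sup>2 * (\<Sum>k. (cmod (f k))\<^sup>2)"
proof -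
  define Jr2 where "Jr2 = (enn2real (J \<alpha> n))\<^sup>2"
  define F2 where "F2 = (\<Sum>k. (cmod (f k))\<^sup>2)"
  have F20: "F2 \<ge> 0" unfolding F2_def using f unfolding l2_def by (intro suminf_nonneg) auto
  have Jr20: "Jr2 \<ge> 0" unfolding Jr2_def by simp
  define w where "w i = (cmod (\<alpha> (i + n)))\<^sup>2" for i
  define aa where "aa j = cmod (f (j + n))" for j
  have bound: "(\<Sum>k\<le>N. (cmod (Hop \<alpha> n f k))\<^sup>2) \<le> 4 * Jr2 * F2" for N
  proof (cases "N < n")
    case True
    then have "(\<Sum>k\<le>N. (cmod (Hop \<alpha> n f k))\<^sup>2) = 0" by (simp add: Hop_def)
    then show ?thesis using F20 Jr20 by simp
  next
    case False
    define K where "K = N - n"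
    have NK: "N = K + n" unfolding K_def using False by simp
    have "(\<Sum>k\<le>N. (cmod (Hop \<alpha> n f k))\<^sup>2) = (\<Sum>k\<in>{n..N}. (cmod (Hop \<alpha> n f k))\<^sup>2)"
      by (intro sum.mono_neutral_right) (auto simp: Hop_def)
    also have "\<dots> = (\<Sum>i\<in>{0..K}. (cmod (Hop \<alpha> n f (i + n)))\<^sup>2)"
      unfolding NK using sum.shift_bounds_cl_nat_ivl[of "\<lambda>k. (cmod (Hop \<alpha> n f k))\<^sup>2" 0 n K] by simp
    also have "\<dots> \<le> (\<Sum>i\<le>K. w i * (\<Sum>j\<le>i. aa j)\<^sup>2)"
      unfolding atMost_atLeast0
    proof (intro sum_mono)
      fix i assume "i \<in> {0..K}"
      have "(\<Sum>j\<in>{n..i+n}. f j) = (\<Sum>j\<in>{0..i}. f (j + n))"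
        using sum.shift_bounds_cl_nat_ivl[of f 0 n i] by simp
      then have "Hop \<alpha> n f (i + n) = \<alpha> (i + n) * (\<Sum>j\<le>i. f (j + n))"
        by (simp add: Hop_def atMost_atLeast0)
      then have "cmod (Hop \<alpha> n f (i + n)) \<le> cmod (\<alpha> (i + n)) * (\<Sum>j\<le>i. aa j)"
        unfolding aa_def by (simp add: norm_mult mult_left_mono norm_sum)
      then show "(cmod (Hop \<alpha> n f (i + n)))\<^sup>2 \<le> w i * (\<Sum>j\<in>{0..i}. aa j)\<^sup>2"
        unfolding w_def atMost_atLeast0 by (metis norm_ge_zero power_mono power_mult_distrib)
    qed
    also have "\<dots> \<le> 4 * Jr2 * (\<Sum>j\<le>K. (aa j)\<^sup>2)"
    proof (rule hardy_fin)
      show "0 \<le> w k" for k unfolding w_def by simp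
      show "0 \<le> Jr2" by (rule Jr20)
      fix m assume mK: "m \<le> K"
      have "(\<Sum>k\<in>{m..K}. w k) = (\<Sum>k\<in>{m+n..K+n}. (cmod (\<alpha> k))\<^sup>2)"
        unfolding w_def using sum.shift_bounds_cl_nat_ivl[of "\<lambda>k. (cmod (\<alpha> k))\<^sup>2" m n K] by simp
      also have "\<dots> \<le> (\<Sum>k. (cmod (\<alpha> (k + (m + n))))\<^sup>2)" by (rule finsum_le_tail[OF a])
      finally have "(real m + 1) * (\<Sum>k\<in>{m..K}. w k) \<le> (real m + 1) * (\<Sum>k. (cmod (\<alpha> (k + (m + n))))\<^sup>2)"
        by (intro mult_left_mono) auto
      also have "\<dots> \<le> Jr2" using J_fin[OF a Jf, of "m + n"] unfolding Jr2_def
        by (simp add: add.commute)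
      finally show "(real m + 1) * (\<Sum>k\<in>{m..K}. w k) \<le> Jr2" .
    qed
    also have "(\<Sum>j\<le>K. (aa j)\<^sup>2) \<le> F2"
    proof -
      have "(\<Sum>j\<le>K. (aa j)\<^sup>2) = (\<Sum>j\<in>{0+n..K+n}. (cmod (f j))\<^sup>2)"
        unfolding aa_def using sum.shift_bounds_cl_nat_ivl[of "\<lambda>k. (cmod (f k))\<^sup>2" 0 n K]
        by (simp add: atMost_atLeast0)
      also have "\<dots> \<le> F2" unfolding F2_def by (rule finsum_le_l2[OF f]) auto
      finally show ?thesis .
    qed
    then have "4 * Jr2 * (\<Sum>j\<le>K. (aa j)\<^sup>2) \<le> 4 * Jr2 * F2" using Jr20 by (intro mult_left_mono) auto
    finally show ?thesis .
  qed
  show ?thesis using bounded_partials_suminf[of "\<lambda>k. (cmod (Hop \<alpha> n f k))\<^sup>2", OF _ bound]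
    unfolding l2_def Jr2_def F2_def by auto
qed

lemma l2_dominated:
  assumes a: "a \<in> l2" and c: "c \<ge> 0" and d: "\<And>k. cmod (g k) \<le> c * cmod (a k)"
  shows "g \<in> l2 \<and> (\<Sum>k. (cmod (g k))\<^sup>2) \<le> c\<^sup>2 * (\<Sum>k. (cmod (a k))\<^sup>2)"
proof -
  have d2: "(cmod (g k))\<^sup>2 \<le> c\<^sup>2 * (cmod (a k))\<^sup>2" for k
    using d[of k] by (metis norm_ge_zero power_mono power_mult_distrib)
  have sa: "summable (\<lambda>k. c\<^sup>2 * (cmod (a k))\<^sup>2)" using a unfolding l2_def by (intro summable_mult) simp
  have sg: "summable (\<lambda>k. (cmod (g k))\<^sup>2)"
    by (rule summable_comparison_test[OF _ sa]) (use d2 in auto)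
  have "(\<Sum>k. (cmod (g k))\<^sup>2) \<le> (\<Sum>k. c\<^sup>2 * (cmod (a k))\<^sup>2)"
    by (intro suminf_le sg sa d2)
  also have "\<dots> = c\<^sup>2 * (\<Sum>k. (cmod (a k))\<^sup>2)" using a unfolding l2_def by (simp add: suminf_mult)
  finally show ?thesis using sg unfolding l2_def by auto
qed


lemma l2_sumsq_nonneg: assumes "f \<in> l2" shows "(\<Sum>k. (cmod (f k))\<^sup>2) \<ge> 0"
  by (intro suminf_nonneg) (use assms in \<open>auto simp: l2_def\<close>)

lemma l2norm_sq: "f \<in> l2 \<Longrightarrow> (l2norm f)\<^sup>2 = (\<Sum>k. (cmod (f k))\<^sup>2)"
  unfolding l2norm_def using l2_sumsq_nonneg by simp

lemma sum_abs_sq_le: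
  fixes f :: "nat \<Rightarrow> complex"
  shows "(\<Sum>j<n. cmod (f j))\<^sup>2 \<le> real n * (\<Sum>j<n. (cmod (f j))\<^sup>2)"
  using sum_squared_le_sum_of_squares[of "\<lambda>j. cmod (f j)" "{..<n}"] by (simp add: mult.commute)

lemma sum_abs_sq_le_l2:
  assumes "f \<in> l2"
  shows "(\<Sum>j<n. cmod (f j))\<^sup>2 \<le> real n * (\<Sum>k. (cmod (f k))\<^sup>2)"
  using sum_abs_sq_le[where n=n and f=f] finsum_le_l2[OF assms, of "{..<n}"]
  by (meson finite_lessThan mult_left_mono of_nat_0_le_iff order_trans)

lemma Fop_pt: "cmod (Fop \<alpha> n f k) \<le> (\<Sum>j<n. cmod (f j)) * cmod (\<alpha> k)"
proof (cases "k < n")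
  case True
  have "cmod (\<Sum>j\<le>k. f j) \<le> (\<Sum>j\<le>k. cmod (f j))" by (rule norm_sum)
  also have "\<dots> \<le> (\<Sum>j<n. cmod (f j))" using True by (intro sum_mono2) auto
  finally show ?thesis using True by (simp add: Fop_def norm_mult mult_left_mono mult.commute)
next
  case False
  then show ?thesis by (simp add: Fop_def norm_mult norm_sum mult_left_mono mult.commute)
qed

lemma Fop_l2:
  assumes a: "\<alpha> \<in> l2" and f: "f \<in> l2"
  shows "Fop \<alpha> n f \<in> l2 \<and> (\<Sum>k. (cmod (Fop \<alpha> n f k))\<^sup>2) \<le> (\<Sum>j<n. cmod (f j))\<^sup>2 * (\<Sum>k. (cmod (\<alpha> k))\<^sup>2)"
  by (rule l2_dominated[OF a]) (simp_all add: sum_nonneg Fop_pt)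

lemma Fop_add: "Fop \<alpha> n (\<lambda>k. f k + g k) = (\<lambda>k. Fop \<alpha> n f k + Fop \<alpha> n g k)"
  by (auto simp: Fop_def sum.distrib distrib_left)

lemma Fop_scale: "Fop \<alpha> n (\<lambda>k. c * f k) = (\<lambda>k. c * Fop \<alpha> n f k)"
  by (auto simp: Fop_def sum_distrib_left mult_ac)

lemma Hop_add: "Hop \<alpha> n (\<lambda>k. f k + g k) = (\<lambda>k. Hop \<alpha> n f k + Hop \<alpha> n g k)"
  by (auto simp: Hop_def sum.distrib distrib_left)

lemma Hop_scale: "Hop \<alpha> n (\<lambda>k. c * f k) = (\<lambda>k. c * Hop \<alpha> n f k)"
  by (auto simp: Hop_def sum_distrib_left mult_ac)

lemma rhaly_add: "rhaly \<alpha> (\<lambda>k. f k + g k) = (\<lambda>k. rhaly \<alpha> f k + rhaly \<alpha> g k)"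
  by (auto simp: rhaly_def sum.distrib distrib_left)

lemma rhaly_scale: "rhaly \<alpha> (\<lambda>k. c * f k) = (\<lambda>k. c * rhaly \<alpha> f k)"
  by (auto simp: rhaly_def sum_distrib_left mult_ac)

lemma finsupp_l2:
  assumes "\<And>k. k \<ge> N \<Longrightarrow> g k = 0"
  shows "g \<in> l2 \<and> (\<Sum>k. (cmod (g k))\<^sup>2) = (\<Sum>k<N. (cmod (g k))\<^sup>2)"
proof -
  have "(\<lambda>k. (cmod (g k))\<^sup>2) sums (\<Sum>k<N. (cmod (g k))\<^sup>2)"
    by (rule sums_finite) (use assms in auto)
  then show ?thesis unfolding l2_def by (auto simp: sums_iff)
qed

lemma Fop_finite_rank:
  assumes a: "\<alpha> \<in> l2"
  shows "finite_rank_op (Fop \<alpha> n)"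
  unfolding finite_rank_op_def
proof (intro conjI ballI allI)
  fix f assume f: "f \<in> l2"
  show "Fop \<alpha> n f \<in> l2" using Fop_l2[OF a f] by simp
next
  fix f g :: "nat \<Rightarrow> complex"
  show "Fop \<alpha> n (\<lambda>k. f k + g k) = (\<lambda>k. Fop \<alpha> n f k + Fop \<alpha> n g k)" by (rule Fop_add)
next
  fix f :: "nat \<Rightarrow> complex" and c :: complex
  show "Fop \<alpha> n (\<lambda>k. c * f k) = (\<lambda>k. c * Fop \<alpha> n f k)" by (rule Fop_scale)
next
  show "\<exists>C. \<forall>f\<in>l2. l2norm (Fop \<alpha> n f) \<le> C * l2norm f"
  proof (intro exI ballI)
    fix f assume f: "f \<in> l2"
    define A2 where "A2 = (\<Sum>k. (cmod (\<alpha> k))\<^sup>2)"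
    define F2 where "F2 = (\<Sum>k. (cmod (f k))\<^sup>2)"
    have A20: "A2 \<ge> 0" unfolding A2_def by (rule l2_sumsq_nonneg[OF a])
    have F20: "F2 \<ge> 0" unfolding F2_def by (rule l2_sumsq_nonneg[OF f])
    have "(\<Sum>k. (cmod (Fop \<alpha> n f k))\<^sup>2) \<le> (\<Sum>j<n. cmod (f j))\<^sup>2 * A2"
      using Fop_l2[OF a f] unfolding A2_def by simp
    also have "\<dots> \<le> (real n * F2) * A2"
      using sum_abs_sq_le_l2[OF f, of n] A20 unfolding F2_def by (intro mult_right_mono) auto
    finally have "sqrt (\<Sum>k. (cmod (Fop \<alpha> n f k))\<^sup>2) \<le> sqrt (real n * F2 * A2)"
      by (rule real_sqrt_le_mono)
    also have "\<dots> = (sqrt (real n) * sqrt A2) * sqrt F2"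
      by (simp add: real_sqrt_mult mult_ac)
    finally show "l2norm (Fop \<alpha> n f) \<le> (sqrt (real n) * l2norm \<alpha>) * l2norm f"
      unfolding l2norm_def A2_def F2_def .
  qed
next
  define v where "v i = (if i < n then (\<lambda>k. if k = i then 1 else 0) else (\<lambda>k. if n \<le> k then \<alpha> k else 0))" for i
  define \<phi> where "\<phi> i f = (if i < n then \<alpha> i * (\<Sum>j\<le>i. f j) else (\<Sum>j<n. f j))" for i and f :: "nat \<Rightarrow> complex"
  show "\<exists>(m::nat) v \<phi>. (\<forall>i<m. v i \<in> l2) \<and> (\<forall>f\<in>l2. Fop \<alpha> n f = (\<lambda>k. \<Sum>i<m. \<phi> i f * v i k))"
  proof -
    have r1: "v i \<in> l2" if "i < Suc n" for i
    proof (cases "i < n")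
      case True
      then show ?thesis unfolding v_def using finsupp_l2[of "Suc i" "\<lambda>k. if k = i then 1 else 0"] by auto
    next
      case False
      then show ?thesis unfolding v_def using l2_dominated[OF a, of 1 "\<lambda>k. if n \<le> k then \<alpha> k else 0"] by auto
    qed
    have r2: "Fop \<alpha> n f = (\<lambda>k. \<Sum>i<Suc n. \<phi> i f * v i k)" for f
    proof
      fix k
      have "(\<Sum>i<Suc n. \<phi> i f * v i k) = (\<Sum>i<n. \<phi> i f * v i k) + \<phi> n f * v n k" by simp
      also have "(\<Sum>i<n. \<phi> i f * v i k) = (if k < n then \<phi> k f else 0)"
        unfolding v_def by (simp add: if_distrib cong: if_cong)
      finally show "Fop \<alpha> n f k = (\<Sum>i<Suc n. \<phi> i f * v i k)"
        unfolding Fop_def \<phi>_def v_def by auto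
    qed
    show ?thesis
      apply (rule_tac x="Suc n" in exI)
      apply (rule_tac x=v in exI)
      apply (rule_tac x=\<phi> in exI)
      using r1 r2 by auto
  qed
qed

lemma tail_nonneg: "\<alpha> \<in> l2 \<Longrightarrow> (\<Sum>k. (cmod (\<alpha> (k + m)))\<^sup>2) \<ge> 0"
  by (intro suminf_nonneg l2_tail_summable) auto

lemma J_decseq:
  assumes a: "\<alpha> \<in> l2"
  shows "decseq (J \<alpha>)"
  unfolding decseq_Suc_iff
proof
  fix n
  show "J \<alpha> (Suc n) \<le> J \<alpha> n"
    unfolding J_def
  proof (rule SUP_least)
    fix m assume m: "m \<in> {Suc n..}"
    have "ennreal (sqrt (real (m + 1 - Suc n)) * sqrt (\<Sum>k. (cmod (\<alpha> (k + m)))\<^sup>2))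
        \<le> ennreal (sqrt (real (m + 1 - n)) * sqrt (\<Sum>k. (cmod (\<alpha> (k + m)))\<^sup>2))"
      using tail_nonneg[OF a, of m] by (intro ennreal_leI mult_right_mono) auto
    also have "\<dots> \<le> (SUP m\<in>{n..}. ennreal (sqrt (real (m + 1 - n)) * sqrt (\<Sum>k. (cmod (\<alpha> (k + m)))\<^sup>2)))"
      using m by (intro SUP_upper) auto
    finally show "ennreal (sqrt (real (m + 1 - Suc n)) * sqrt (\<Sum>k. (cmod (\<alpha> (k + m)))\<^sup>2))
        \<le> (SUP m\<in>{n..}. ennreal (sqrt (real (m + 1 - n)) * sqrt (\<Sum>k. (cmod (\<alpha> (k + m)))\<^sup>2)))" .
  qed
qed

lemma J_lim:
  assumes a: "\<alpha> \<in> l2"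
  shows "J \<alpha> \<longlonglongrightarrow> lim (J \<alpha>)" "lim (J \<alpha>) = (INF n. J \<alpha> n)" "convergent (J \<alpha>)"
proof -
  have t: "J \<alpha> \<longlonglongrightarrow> (INF n. J \<alpha> n)" by (rule LIMSEQ_INF[OF J_decseq[OF a]])
  then show "lim (J \<alpha>) = (INF n. J \<alpha> n)" by (rule limI)
  with t show "J \<alpha> \<longlonglongrightarrow> lim (J \<alpha>)" by simp
  from t show "convergent (J \<alpha>)" unfolding convergent_def by blast
qed

lemma lim_le_J: "\<alpha> \<in> l2 \<Longrightarrow> lim (J \<alpha>) \<le> J \<alpha> n"
  using J_lim(2) by (simp add: INF_lower)

lemma l2enorm_l2: "g \<in> l2 \<Longrightarrow> l2enorm g = ennreal (l2norm g)"
  unfolding l2enorm_def by simp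

lemma opnorm_R_minus_F:
  assumes a: "\<alpha> \<in> l2"
  shows "opnorm (\<lambda>f k. rhaly \<alpha> f k - Fop \<alpha> n f k) \<le> ennreal 2 * J \<alpha> n"
proof (cases "J \<alpha> n = \<infinity>")
  case True then show ?thesis by (simp add: ennreal_mult_top)
next
  case False
  define Jr where "Jr = enn2real (J \<alpha> n)"
  have Jr0: "Jr \<ge> 0" unfolding Jr_def by simp
  have JJ: "J \<alpha> n = ennreal Jr" unfolding Jr_def using False by (simp add: top.not_eq_extremum)
  show ?thesis unfolding opnorm_def
  proof (rule SUP_least)
    fix f assume f: "f \<in> {f \<in> l2. l2norm f \<le> 1}"
    then have fl: "f \<in> l2" and f1: "l2norm f \<le> 1" by auto
    have eq: "(\<lambda>k. rhaly \<alpha> f k - Fop \<alpha> n f k) = Hop \<alpha> n f"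
      by (rule ext) (simp add: rhaly_split[of \<alpha> f _ n])
    have H: "Hop \<alpha> n f \<in> l2" "(\<Sum>k. (cmod (Hop \<alpha> n f k))\<^sup>2) \<le> 4 * Jr\<^sup>2 * (\<Sum>k. (cmod (f k))\<^sup>2)"
      using Hop_bound[OF a False fl] unfolding Jr_def by auto
    have F2: "(\<Sum>k. (cmod (f k))\<^sup>2) \<le> 1"
      using f1 unfolding l2norm_def by simp
    have "4 * Jr\<^sup>2 * (\<Sum>k. (cmod (f k))\<^sup>2) \<le> 4 * Jr\<^sup>2 * 1"
      by (intro mult_left_mono F2) simp
    with H(2) have H2: "(\<Sum>k. (cmod (Hop \<alpha> n f k))\<^sup>2) \<le> 4 * Jr\<^sup>2 * 1" by linarith
    have "l2norm (Hop \<alpha> n f) = sqrt (\<Sum>k. (cmod (Hop \<alpha> n f k))\<^sup>2)" by (simp add: l2norm_def)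
    also have "\<dots> \<le> sqrt (4 * Jr\<^sup>2 * 1)"
      using H2 by (rule real_sqrt_le_mono)
    also have "\<dots> = 2 * Jr" using Jr0 by (simp add: real_sqrt_mult)
    finally have "l2norm (Hop \<alpha> n f) \<le> 2 * Jr" .
    then have "ennreal (l2norm (Hop \<alpha> n f)) \<le> ennreal (2 * Jr)" by (rule ennreal_leI)
    also have "\<dots> = ennreal 2 * ennreal Jr" using Jr0 by (simp add: ennreal_mult)
    finally show "l2enorm (\<lambda>k. rhaly \<alpha> f k - Fop \<alpha> n f k) \<le> ennreal 2 * J \<alpha> n"
      unfolding eq l2enorm_l2[OF H(1)] JJ .
  qed
qed

lemma ess_upper:
  assumes a: "\<alpha> \<in> l2"
  shows "ess_norm (rhaly \<alpha>) \<le> ennreal 2 * lim (J \<alpha>)"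
proof -
  have e: "ess_norm (rhaly \<alpha>) \<le> ennreal 2 * J \<alpha> n" for n
  proof -
    have "ess_norm (rhaly \<alpha>) \<le> opnorm (\<lambda>f k. rhaly \<alpha> f k - Fop \<alpha> n f k)"
      unfolding ess_norm_def using Fop_finite_rank[OF a, of n] by (intro INF_lower) auto
    also have "\<dots> \<le> ennreal 2 * J \<alpha> n" by (rule opnorm_R_minus_F[OF a])
    finally show ?thesis .
  qed
  have "(\<lambda>n. ennreal 2 * J \<alpha> n) \<longlonglongrightarrow> ennreal 2 * lim (J \<alpha>)"
    by (intro ennreal_tendsto_cmult J_lim(1)[OF a]) simp
  then show ?thesis using e by (intro LIMSEQ_le_const) auto
qed


lemma linsys:
  fixes A :: "'l \<Rightarrow> nat \<Rightarrow> complex"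
  assumes "finite L" "card L < M"
  shows "\<exists>c. (\<exists>i<M. c i \<noteq> 0) \<and> (\<forall>l\<in>L. (\<Sum>i<M. c i * A l i) = 0)"
  using assms
proof (induction M arbitrary: L A)
  case 0 then show ?case by simp
next
  case (Suc M)
  show ?case
  proof (cases "\<forall>l\<in>L. A l M = 0")
    case True
    show ?thesis
      by (rule exI[where x="\<lambda>i. if i = M then 1 else 0"]) (use True in auto)
  next
    case False
    then obtain l0 where l0: "l0 \<in> L" "A l0 M \<noteq> 0" by auto
    define L' where "L' = L - {l0}"
    have fL': "finite L'" unfolding L'_def using Suc.prems by simp
    have "card L > 0" using l0 Suc.prems(1) card_gt_0_iff by blast
    then have cL': "card L' < M" unfolding L'_def using Suc.prems l0 by (simp add: card_Diff_singleton)
    define B where "B l i = A l i - A l M * A l0 i / A l0 M" for l i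
    obtain d where d: "\<exists>i<M. d i \<noteq> 0" "\<forall>l\<in>L'. (\<Sum>i<M. d i * B l i) = 0"
      using Suc.IH[OF fL' cL', of B] by blast
    define s where "s = (\<Sum>i<M. d i * A l0 i)"
    define c where "c i = (if i < M then d i else - s / A l0 M)" for i
    have cM: "(\<Sum>i<M. c i * A l i) = (\<Sum>i<M. d i * A l i)" for l
      unfolding c_def by (intro sum.cong) auto
    have row: "(\<Sum>i<Suc M. c i * A l i) = (\<Sum>i<M. d i * A l i) - s * A l M / A l0 M" for l
      using cM[of l] by (simp add: c_def)
    show ?thesis
    proof (intro exI[where x=c] conjI ballI)
      show "\<exists>i<Suc M. c i \<noteq> 0" using d(1) unfolding c_def by force
    next
      fix l assume l: "l \<in> L"
      show "(\<Sum>i<Suc M. c i * A l i) = 0"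
      proof (cases "l = l0")
        case True
        then show ?thesis using row[of l] l0(2) unfolding s_def by simp
      next
        case False
        then have "l \<in> L'" using l unfolding L'_def by auto
        then have "(\<Sum>i<M. d i * B l i) = 0" using d(2) by auto
        moreover have "(\<Sum>i<M. d i * B l i) = (\<Sum>i<M. d i * A l i) - s * A l M / A l0 M"
          unfolding B_def s_def by (simp add: algebra_simps sum_subtractf sum_distrib_left sum_divide_distrib)
        ultimately show ?thesis using row[of l] by simp
      qed
    qed
  qed
qed

lemma sq_le2: "((a::real) + b)\<^sup>2 \<le> 2 * a\<^sup>2 + 2 * b\<^sup>2"
proof -
  have "0 \<le> (a - b)\<^sup>2" by simp
  moreover have "(a + b)\<^sup>2 = 2 * a\<^sup>2 + 2 * b\<^sup>2 - (a - b)\<^sup>2" by (simp add: power2_eq_square algebra_simps)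
  ultimately show ?thesis by linarith
qed

lemma l2_add:
  assumes "f \<in> l2" "g \<in> l2"
  shows "(\<lambda>k. f k + g k) \<in> l2"
proof -
  have "(cmod (f k + g k))\<^sup>2 \<le> 2 * (cmod (f k))\<^sup>2 + 2 * (cmod (g k))\<^sup>2" for k
  proof -
    have "cmod (f k + g k) \<le> cmod (f k) + cmod (g k)" by (rule norm_triangle_ineq)
    then have "(cmod (f k + g k))\<^sup>2 \<le> (cmod (f k) + cmod (g k))\<^sup>2" by (intro power_mono) auto
    also have "\<dots> \<le> 2 * (cmod (f k))\<^sup>2 + 2 * (cmod (g k))\<^sup>2"
      by (rule sq_le2)
    finally show ?thesis .
  qed
  moreover have "summable (\<lambda>k. 2 * (cmod (f k))\<^sup>2 + 2 * (cmod (g k))\<^sup>2)"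
    using assms unfolding l2_def by (intro summable_add summable_mult) auto
  ultimately show ?thesis unfolding l2_def
    by (auto intro: summable_comparison_test[where g="\<lambda>k. 2 * (cmod (f k))\<^sup>2 + 2 * (cmod (g k))\<^sup>2"])
qed

lemma l2_scale:
  assumes "f \<in> l2"
  shows "(\<lambda>k. c * f k) \<in> l2 \<and> (\<Sum>k. (cmod (c * f k))\<^sup>2) = (cmod c)\<^sup>2 * (\<Sum>k. (cmod (f k))\<^sup>2)"
proof -
  have e: "(\<lambda>k. (cmod (c * f k))\<^sup>2) = (\<lambda>k. (cmod c)\<^sup>2 * (cmod (f k))\<^sup>2)"
    by (simp add: norm_mult power_mult_distrib)
  show ?thesis using assms unfolding l2_def e by (auto simp: norm_mult power_mult_distrib intro: summable_mult suminf_mult)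
qed

lemma block:
  assumes a: "\<alpha> \<in> l2" and x0: "x \<ge> 0" and xJ: "ennreal x < J \<alpha> a0"
  shows "\<exists>b>a0. \<exists>g. (\<forall>k. k < a0 \<or> b \<le> k \<longrightarrow> g k = 0) \<and> (\<forall>k. k < a0 \<or> b \<le> k \<longrightarrow> rhaly \<alpha> g k = 0)
     \<and> 0 < (\<Sum>k<b. (cmod (g k))\<^sup>2) \<and> x\<^sup>2 * (\<Sum>k<b. (cmod (g k))\<^sup>2) \<le> (\<Sum>k<b. (cmod (rhaly \<alpha> g k))\<^sup>2)"
proof -
  obtain m where m: "m \<ge> a0" and mx: "ennreal x < ennreal (sqrt (real (m + 1 - a0)) * sqrt (\<Sum>k. (cmod (\<alpha> (k + m)))\<^sup>2))"
    using xJ unfolding J_def less_SUP_iff by auto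
  define pn where "pn = m + 1 - a0"
  define p where "p = real pn"
  define t where "t = (\<Sum>k. (cmod (\<alpha> (k + m)))\<^sup>2)"
  have p1: "p \<ge> 1" unfolding p_def pn_def using m by simp
  have t0: "t \<ge> 0" unfolding t_def by (rule tail_nonneg[OF a])
  have "x < sqrt p * sqrt t" using mx x0 unfolding p_def pn_def t_def by (simp add: ennreal_less_iff)
  then have "x\<^sup>2 < (sqrt p * sqrt t)\<^sup>2" using x0 by (intro power_strict_mono) auto
  then have xpt: "x\<^sup>2 < p * t" using p1 t0 by (simp add: power_mult_distrib)
  have "(\<lambda>M. p * (\<Sum>i<M. (cmod (\<alpha> (i + m)))\<^sup>2)) \<longlonglongrightarrow> p * t"
    unfolding t_def by (intro tendsto_mult_left summable_LIMSEQ l2_tail_summable a)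
  from order_tendstoD(1)[OF this xpt] obtain M where
    MA: "x\<^sup>2 < p * (\<Sum>i<M. (cmod (\<alpha> (i + m)))\<^sup>2)"
    unfolding eventually_sequentially by auto
  define A where "A = (\<Sum>i<M. (cmod (\<alpha> (i + m)))\<^sup>2)"
  define D where "D = p * A - x\<^sup>2"
  have D0: "D > 0" unfolding D_def A_def using MA by simp
  define L :: nat where "L = nat \<lceil>x\<^sup>2 * p / D\<rceil> + 1"
  have L1: "real L \<ge> 1" unfolding L_def by simp
  have "x\<^sup>2 * p / D \<le> real L" unfolding L_def by linarith
  then have xpL: "x\<^sup>2 * p \<le> real L * D" using D0 by (simp add: field_simps)
  define c where "c = m + M"
  define q where "q = complex_of_real (p / real L)"
  define g where "g j = (if a0 \<le> j \<and> j \<le> m then 1 else if c < j \<and> j \<le> c + L then - q else 0)" for j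
  define b where "b = c + L + 1"
  have nq: "cmod q = p / real L" unfolding q_def using p1 by (simp only: norm_of_real) simp
  have ba: "b > a0" unfolding b_def c_def using m by simp
  have g0: "g k = 0" if "k < a0 \<or> b \<le> k" for k
    using that m unfolding g_def b_def c_def by auto
  have sum_am: "(\<Sum>j\<in>{a0..m}. g j) = of_real p"
    unfolding p_def pn_def g_def by simp
  have S1: "(\<Sum>j\<le>k. g j) = of_real p" if "m \<le> k" "k \<le> c" for k
  proof -
    have "(\<Sum>j\<le>k. g j) = (\<Sum>j\<in>{a0..m}. g j)"
      by (rule sum.mono_neutral_right) (use that in \<open>auto simp: g_def\<close>)
    then show ?thesis using sum_am by simp
  qed
  have S2: "(\<Sum>j\<le>k. g j) = 0" if "c + L \<le> k" for k
  proof -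
    have sub: "{a0..m} \<union> {c<..c+L} \<subseteq> {..k}" using that unfolding c_def by auto
    have "(\<Sum>j\<le>k. g j) = (\<Sum>j\<in>{a0..m} \<union> {c<..c+L}. g j)"
      by (rule sum.mono_neutral_right[OF _ sub]) (auto simp: g_def)
    also have "\<dots> = (\<Sum>j\<in>{a0..m}. g j) + (\<Sum>j\<in>{c<..c+L}. g j)"
      by (rule sum.union_disjoint) (auto simp: c_def)
    also have "(\<Sum>j\<in>{c<..c+L}. g j) = (\<Sum>j\<in>{c<..c+L}. - q)"
      by (intro sum.cong) (auto simp: g_def c_def)
    also have "\<dots> = - of_nat L * q" by simp
    also have "\<dots> = - of_real p" unfolding q_def using L1 by (simp add: field_simps)
    finally show ?thesis using sum_am by simp
  qed
  have S0: "(\<Sum>j\<le>k. g j) = 0" if "k < a0" for k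
    using that by (intro sum.neutral) (use m in \<open>auto simp: g_def c_def\<close>)
  have R0: "rhaly \<alpha> g k = 0" if "k < a0 \<or> b \<le> k" for k
    using that S0 S2 unfolding rhaly_def b_def by auto
  have N1: "(\<Sum>k<b. (cmod (g k))\<^sup>2) = p + real L * (p / real L)\<^sup>2"
  proof -
    have sub: "{a0..m} \<union> {c<..c+L} \<subseteq> {..<b}" unfolding b_def c_def by auto
    have "(\<Sum>k<b. (cmod (g k))\<^sup>2) = (\<Sum>j\<in>{a0..m} \<union> {c<..c+L}. (cmod (g j))\<^sup>2)"
      by (rule sum.mono_neutral_right[OF _ sub]) (auto simp: g_def)
    also have "\<dots> = (\<Sum>j\<in>{a0..m}. (cmod (g j))\<^sup>2) + (\<Sum>j\<in>{c<..c+L}. (cmod (g j))\<^sup>2)"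
      by (rule sum.union_disjoint) (auto simp: c_def)
    also have "(\<Sum>j\<in>{a0..m}. (cmod (g j))\<^sup>2) = p"
      unfolding p_def pn_def g_def by simp
    also have "(\<Sum>j\<in>{c<..c+L}. (cmod (g j))\<^sup>2) = (\<Sum>j\<in>{c<..c+L}. (p / real L)\<^sup>2)"
      using p1 L1 nq by (intro sum.cong) (auto simp: g_def c_def)
    also have "\<dots> = real L * (p / real L)\<^sup>2" by simp
    finally show ?thesis .
  qed
  have N2: "p\<^sup>2 * A \<le> (\<Sum>k<b. (cmod (rhaly \<alpha> g k))\<^sup>2)"
  proof -
    have "(\<Sum>k\<in>{m..<c}. (cmod (rhaly \<alpha> g k))\<^sup>2) = (\<Sum>k\<in>{m..<c}. p\<^sup>2 * (cmod (\<alpha> k))\<^sup>2)"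
    proof (intro sum.cong refl)
      fix k assume "k \<in> {m..<c}"
      then have "rhaly \<alpha> g k = \<alpha> k * of_real p" using S1[of k] unfolding rhaly_def by auto
      then show "(cmod (rhaly \<alpha> g k))\<^sup>2 = p\<^sup>2 * (cmod (\<alpha> k))\<^sup>2"
        using p1 by (simp add: norm_mult power_mult_distrib)
    qed
    also have "\<dots> = p\<^sup>2 * A"
      unfolding A_def c_def sum_distrib_left[symmetric]
      using sum.shift_bounds_nat_ivl[of "\<lambda>k. (cmod (\<alpha> k))\<^sup>2" 0 m M]
      by (simp add: atLeast0LessThan add.commute)
    finally have "p\<^sup>2 * A = (\<Sum>k\<in>{m..<c}. (cmod (rhaly \<alpha> g k))\<^sup>2)" by simp
    also have "\<dots> \<le> (\<Sum>k<b. (cmod (rhaly \<alpha> g k))\<^sup>2)"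
      by (rule sum_mono2) (auto simp: b_def)
    finally show ?thesis .
  qed
  have fin: "x\<^sup>2 * (p + real L * (p / real L)\<^sup>2) \<le> p\<^sup>2 * A"
  proof -
    have "x\<^sup>2 * p / real L \<le> D" using xpL L1 by (simp add: field_simps)
    then have "x\<^sup>2 + x\<^sup>2 * p / real L \<le> p * A" unfolding D_def by simp
    then have "p * (x\<^sup>2 + x\<^sup>2 * p / real L) \<le> p * (p * A)" using p1 by (intro mult_left_mono) auto
    moreover have "x\<^sup>2 * (p + real L * (p / real L)\<^sup>2) = p * (x\<^sup>2 + x\<^sup>2 * p / real L)"
      using L1 by (simp add: field_simps power2_eq_square)
    ultimately show ?thesis by (simp add: power2_eq_square mult_ac)
  qed
  have pos: "0 < p + real L * (p / real L)\<^sup>2" using p1 L1 by (simp add: add_pos_nonneg)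
  show ?thesis
    by (rule exI[where x=b], rule conjI[OF ba], rule exI[where x=g])
       (use g0 R0 N1 N2 fin pos in auto)
qed

lemma blocks_seq:
  assumes a: "\<alpha> \<in> l2" and x0: "x \<ge> 0" and xJ: "\<And>a. ennreal x < J \<alpha> a"
  shows "\<exists>\<beta> G. strict_mono \<beta> \<and> (\<forall>i k. k < \<beta> i \<or> \<beta> (Suc i) \<le> k \<longrightarrow> G i k = 0)
    \<and> (\<forall>i k. k < \<beta> i \<or> \<beta> (Suc i) \<le> k \<longrightarrow> rhaly \<alpha> (G i) k = 0)
    \<and> (\<forall>i. 0 < (\<Sum>k<\<beta> (Suc i). (cmod (G i k))\<^sup>2))
    \<and> (\<forall>i. x\<^sup>2 * (\<Sum>k<\<beta> (Suc i). (cmod (G i k))\<^sup>2) \<le> (\<Sum>k<\<beta> (Suc i). (cmod (rhaly \<alpha> (G i) k))\<^sup>2))"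
proof -
  define Q where "Q a0 b g \<longleftrightarrow> b > a0 \<and> (\<forall>k. k < a0 \<or> b \<le> k \<longrightarrow> g k = 0) \<and> (\<forall>k. k < a0 \<or> b \<le> k \<longrightarrow> rhaly \<alpha> g k = 0)
     \<and> 0 < (\<Sum>k<b. (cmod (g k))\<^sup>2) \<and> x\<^sup>2 * (\<Sum>k<b. (cmod (g k))\<^sup>2) \<le> (\<Sum>k<b. (cmod (rhaly \<alpha> g k))\<^sup>2)"
    for a0 b and g :: "nat \<Rightarrow> complex"
  have "\<exists>bg. Q a0 (fst bg) (snd bg)" for a0
    using block[OF a x0 xJ, of a0] unfolding Q_def by auto
  then have "\<forall>a0. \<exists>bg. Q a0 (fst bg) (snd bg)" by blast
  then obtain F where F: "\<forall>a0. Q a0 (fst (F a0)) (snd (F a0))" by (rule choice[THEN exE]) blast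
  define bf where "bf a0 = fst (F a0)" for a0
  define gf where "gf a0 = snd (F a0)" for a0
  have gf: "bf a0 > a0 \<and> (\<forall>k. k < a0 \<or> bf a0 \<le> k \<longrightarrow> gf a0 k = 0) \<and> (\<forall>k. k < a0 \<or> bf a0 \<le> k \<longrightarrow> rhaly \<alpha> (gf a0) k = 0)
     \<and> 0 < (\<Sum>k<bf a0. (cmod (gf a0 k))\<^sup>2) \<and> x\<^sup>2 * (\<Sum>k<bf a0. (cmod (gf a0 k))\<^sup>2) \<le> (\<Sum>k<bf a0. (cmod (rhaly \<alpha> (gf a0) k))\<^sup>2)" for a0
    using F unfolding Q_def bf_def gf_def by blast
  define \<beta> where "\<beta> = rec_nat 0 (\<lambda>_ b. bf b)"
  have b0: "\<beta> 0 = 0" and bS: "\<beta> (Suc i) = bf (\<beta> i)" for i unfolding \<beta>_def by simp_all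
  have sm: "strict_mono \<beta>" unfolding strict_mono_Suc_iff bS using gf by auto
  show ?thesis
    by (rule exI[where x=\<beta>], rule exI[where x="\<lambda>i. gf (\<beta> i)"]) (use sm gf in \<open>auto simp: bS\<close>)
qed

lemma block_sum:
  fixes u :: "nat \<Rightarrow> nat \<Rightarrow> complex"
  assumes sm: "strict_mono \<beta>" and supp: "\<And>i k. k < \<beta> i \<or> \<beta> (Suc i) \<le> k \<Longrightarrow> u i k = 0"
  shows "(\<Sum>k<\<beta> N. (cmod (\<Sum>i<N. c i * u i k))\<^sup>2) = (\<Sum>i<N. (cmod (c i))\<^sup>2 * (\<Sum>k<\<beta> (Suc i). (cmod (u i k))\<^sup>2))"
proof (induction N)
  case 0 then show ?case by simp
next
  case (Suc N)
  have mono: "\<beta> i \<le> \<beta> j" if "i \<le> j" for i j using sm that by (simp add: strict_mono_less_eq)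
  have le: "\<beta> N \<le> \<beta> (Suc N)" by (rule mono) simp
  have split: "{..<\<beta> (Suc N)} = {..<\<beta> N} \<union> {\<beta> N..<\<beta> (Suc N)}" using le by auto
  have p1: "(\<Sum>k<\<beta> N. (cmod (\<Sum>i<Suc N. c i * u i k))\<^sup>2) = (\<Sum>k<\<beta> N. (cmod (\<Sum>i<N. c i * u i k))\<^sup>2)"
    by (intro sum.cong) (auto simp: supp)
  have p2: "(\<Sum>k\<in>{\<beta> N..<\<beta> (Suc N)}. (cmod (\<Sum>i<Suc N. c i * u i k))\<^sup>2)
      = (\<Sum>k\<in>{\<beta> N..<\<beta> (Suc N)}. (cmod (c N))\<^sup>2 * (cmod (u N k))\<^sup>2)"
  proof (intro sum.cong refl)
    fix k assume k: "k \<in> {\<beta> N..<\<beta> (Suc N)}"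
    have "(\<Sum>i<N. c i * u i k) = 0"
    proof (intro sum.neutral ballI)
      fix i assume "i \<in> {..<N}"
      then have "\<beta> (Suc i) \<le> \<beta> N" by (intro mono) auto
      then show "c i * u i k = 0" using k supp by auto
    qed
    then show "(cmod (\<Sum>i<Suc N. c i * u i k))\<^sup>2 = (cmod (c N))\<^sup>2 * (cmod (u N k))\<^sup>2"
      by (simp add: norm_mult power_mult_distrib)
  qed
  have p3: "(\<Sum>k\<in>{\<beta> N..<\<beta> (Suc N)}. (cmod (u N k))\<^sup>2) = (\<Sum>k<\<beta> (Suc N). (cmod (u N k))\<^sup>2)"
    by (rule sum.mono_neutral_left) (auto simp: supp)
  have "(\<Sum>k<\<beta> (Suc N). (cmod (\<Sum>i<Suc N. c i * u i k))\<^sup>2)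
      = (\<Sum>k<\<beta> N. (cmod (\<Sum>i<Suc N. c i * u i k))\<^sup>2) + (\<Sum>k\<in>{\<beta> N..<\<beta> (Suc N)}. (cmod (\<Sum>i<Suc N. c i * u i k))\<^sup>2)"
    unfolding split by (rule sum.union_disjoint) auto
  also have "\<dots> = (\<Sum>i<N. (cmod (c i))\<^sup>2 * (\<Sum>k<\<beta> (Suc i). (cmod (u i k))\<^sup>2)) + (cmod (c N))\<^sup>2 * (\<Sum>k<\<beta> (Suc N). (cmod (u N k))\<^sup>2)"
    unfolding p1 p2 Suc.IH p3[symmetric] by (simp add: sum_distrib_left)
  finally show ?case by simp
qed

lemma block_sum_supp:
  fixes u :: "nat \<Rightarrow> nat \<Rightarrow> complex"
  assumes sm: "strict_mono \<beta>" and supp: "\<And>i k. k < \<beta> i \<or> \<beta> (Suc i) \<le> k \<Longrightarrow> u i k = 0"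
    and k: "\<beta> N \<le> k"
  shows "(\<Sum>i<N. c i * u i k) = 0"
proof (intro sum.neutral ballI)
  fix i assume "i \<in> {..<N}"
  then have "\<beta> (Suc i) \<le> \<beta> N" using sm by (simp add: strict_mono_less_eq)
  then show "c i * u i k = 0" using k supp by auto
qed

lemma rhaly_sum: "rhaly \<alpha> (\<lambda>k. \<Sum>i<N. c i * u i k) k = (\<Sum>i<N. c i * rhaly \<alpha> (u i) k)"
  unfolding rhaly_def by (simp add: sum_distrib_left sum.swap[of _ "{..k}"] mult_ac)

lemma l2_zero: "(\<lambda>k. 0) \<in> l2" unfolding l2_def by simp

lemma l2_sum:
  fixes N :: nat and u :: "nat \<Rightarrow> nat \<Rightarrow> complex"
  assumes "\<And>i. u i \<in> l2"
  shows "(\<lambda>k. \<Sum>i<N. c i * u i k) \<in> l2"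
proof (induction N)
  case 0 then show ?case using l2_zero by simp
next
  case (Suc N)
  have "(\<lambda>k. (\<Sum>i<N. c i * u i k) + c N * u N k) \<in> l2"
    by (intro l2_add Suc.IH conjunct1[OF l2_scale] assms)
  then show ?case by simp
qed

lemma lin_sum:
  fixes N :: nat and u :: "nat \<Rightarrow> nat \<Rightarrow> complex"
  assumes add: "\<forall>f\<in>l2. \<forall>g\<in>l2. P (\<lambda>k. f k + g k) = (\<lambda>k. P f k + P g k)"
    and sc: "\<forall>f\<in>l2. \<forall>c::complex. P (\<lambda>k. c * f k) = (\<lambda>k. c * P f k)"
    and u: "\<And>i. u i \<in> l2"
  shows "P (\<lambda>k. \<Sum>i<N. c i * u i k) = (\<lambda>k. \<Sum>i<N. c i * P (u i) k)"
proof (induction N)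
  case 0
  have "P (\<lambda>k. 0 * (0::complex)) = (\<lambda>k. 0 * P (\<lambda>k. 0) k)"
    using bspec[OF sc l2_zero, THEN spec[of _ 0]] by simp
  then show ?case by simp
next
  case (Suc N)
  have "P (\<lambda>k. \<Sum>i<Suc N. c i * u i k) = P (\<lambda>k. (\<Sum>i<N. c i * u i k) + c N * u N k)" by simp
  also have "\<dots> = (\<lambda>k. P (\<lambda>k. \<Sum>i<N. c i * u i k) k + P (\<lambda>k. c N * u N k) k)"
  proof -
    have h1: "(\<lambda>k. \<Sum>i<N. c i * u i k) \<in> l2" by (rule l2_sum[OF u])
    have h2: "(\<lambda>k. c N * u N k) \<in> l2" using l2_scale[OF u[of N]] by simp
    show ?thesis using bspec[OF bspec[OF add h1] h2] by simp
  qed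
  also have "P (\<lambda>k. c N * u N k) = (\<lambda>k. c N * P (u N) k)" using bspec[OF sc u[of N]] by simp
  finally show ?case unfolding Suc.IH by simp
qed

lemma l2norm_scale:
  assumes "f \<in> l2"
  shows "l2norm (\<lambda>k. c * f k) = cmod c * l2norm f"
  using l2_scale[OF assms, of c] unfolding l2norm_def by (simp add: real_sqrt_mult)

lemma ess_lower_P:
  assumes a: "\<alpha> \<in> l2" and P: "finite_rank_op P"
  shows "lim (J \<alpha>) \<le> opnorm (\<lambda>f k. rhaly \<alpha> f k - P f k)"
proof (rule dense_le)
  fix y assume y: "y < lim (J \<alpha>)"
  have yt: "y < top" using less_le_trans[OF y top_greatest] .
  define x where "x = enn2real y"
  have x0: "x \<ge> 0" unfolding x_def by simp
  have yx: "y = ennreal x" unfolding x_def using yt by simp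
  have xJ: "ennreal x < J \<alpha> a0" for a0 using y lim_le_J[OF a, of a0] yx by simp
  obtain \<beta> G where sm: "strict_mono \<beta>"
    and Gs: "\<And>i k. k < \<beta> i \<or> \<beta> (Suc i) \<le> k \<Longrightarrow> G i k = 0"
    and RGs: "\<And>i k. k < \<beta> i \<or> \<beta> (Suc i) \<le> k \<Longrightarrow> rhaly \<alpha> (G i) k = 0"
    and Gp: "\<And>i. 0 < (\<Sum>k<\<beta> (Suc i). (cmod (G i k))\<^sup>2)"
    and Gx: "\<And>i. x\<^sup>2 * (\<Sum>k<\<beta> (Suc i). (cmod (G i k))\<^sup>2) \<le> (\<Sum>k<\<beta> (Suc i). (cmod (rhaly \<alpha> (G i) k))\<^sup>2)"
    using blocks_seq[OF a x0 xJ] by metis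
  have add: "\<forall>f\<in>l2. \<forall>g\<in>l2. P (\<lambda>k. f k + g k) = (\<lambda>k. P f k + P g k)"
    and sc: "\<forall>f\<in>l2. \<forall>c::complex. P (\<lambda>k. c * f k) = (\<lambda>k. c * P f k)"
    using P unfolding finite_rank_op_def by auto
  obtain n :: nat and v :: "nat \<Rightarrow> nat \<Rightarrow> complex" and \<phi> :: "nat \<Rightarrow> (nat \<Rightarrow> complex) \<Rightarrow> complex"
    where rep: "\<forall>f\<in>l2. P f = (\<lambda>k. \<Sum>i<n. \<phi> i f * v i k)"
    using P unfolding finite_rank_op_def by blast
  have Gl2: "G i \<in> l2" for i using finsupp_l2[of "\<beta> (Suc i)" "G i"] Gs by auto
  obtain c where c1: "\<exists>i<Suc n. c i \<noteq> 0" and c2: "\<forall>l\<in>{..<n}. (\<Sum>i<Suc n. c i * \<phi> l (G i)) = 0"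
    using linsys[of "{..<n}" "Suc n" "\<lambda>l i. \<phi> l (G i)"] by auto
  define M where "M = Suc n"
  define g where "g = (\<lambda>k. \<Sum>i<M. c i * G i k)"
  have gs: "g k = 0" if "\<beta> M \<le> k" for k
    unfolding g_def by (rule block_sum_supp[OF sm _ that]) (use Gs in auto)
  have Rg: "rhaly \<alpha> g = (\<lambda>k. \<Sum>i<M. c i * rhaly \<alpha> (G i) k)"
    unfolding g_def by (rule ext) (rule rhaly_sum)
  have Rgs: "rhaly \<alpha> g k = 0" if "\<beta> M \<le> k" for k
    unfolding Rg by (rule block_sum_supp[OF sm _ that]) (use RGs in auto)
  have gl2: "g \<in> l2" and SG: "(\<Sum>k. (cmod (g k))\<^sup>2) = (\<Sum>k<\<beta> M. (cmod (g k))\<^sup>2)"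
    using finsupp_l2[of "\<beta> M" g] gs by auto
  have Rgl2: "rhaly \<alpha> g \<in> l2" and SR: "(\<Sum>k. (cmod (rhaly \<alpha> g k))\<^sup>2) = (\<Sum>k<\<beta> M. (cmod (rhaly \<alpha> g k))\<^sup>2)"
    using finsupp_l2[of "\<beta> M" "rhaly \<alpha> g"] Rgs by auto
  have SG2: "(\<Sum>k<\<beta> M. (cmod (g k))\<^sup>2) = (\<Sum>i<M. (cmod (c i))\<^sup>2 * (\<Sum>k<\<beta> (Suc i). (cmod (G i k))\<^sup>2))"
    unfolding g_def by (rule block_sum[OF sm]) (use Gs in auto)
  have SR2: "(\<Sum>k<\<beta> M. (cmod (rhaly \<alpha> g k))\<^sup>2) = (\<Sum>i<M. (cmod (c i))\<^sup>2 * (\<Sum>k<\<beta> (Suc i). (cmod (rhaly \<alpha> (G i) k))\<^sup>2))"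
    unfolding Rg by (rule block_sum[OF sm]) (use RGs in auto)
  define sg where "sg = (\<Sum>k. (cmod (g k))\<^sup>2)"
  define sr where "sr = (\<Sum>k. (cmod (rhaly \<alpha> g k))\<^sup>2)"
  have sgpos: "sg > 0"
  proof -
    obtain i0 where i0: "i0 < M" "c i0 \<noteq> 0" using c1 unfolding M_def by auto
    have "0 < (\<Sum>i<M. (cmod (c i))\<^sup>2 * (\<Sum>k<\<beta> (Suc i). (cmod (G i k))\<^sup>2))"
      by (rule sum_pos2[of _ i0]) (use i0 Gp in \<open>auto intro!: mult_pos_pos mult_nonneg_nonneg sum_nonneg\<close>)
    then show ?thesis unfolding sg_def SG SG2 .
  qed
  have srx: "x\<^sup>2 * sg \<le> sr"
  proof -
    have "x\<^sup>2 * sg = (\<Sum>i<M. (cmod (c i))\<^sup>2 * (x\<^sup>2 * (\<Sum>k<\<beta> (Suc i). (cmod (G i k))\<^sup>2)))"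
      unfolding sg_def SG SG2 by (simp add: sum_distrib_left mult_ac)
    also have "\<dots> \<le> (\<Sum>i<M. (cmod (c i))\<^sup>2 * (\<Sum>k<\<beta> (Suc i). (cmod (rhaly \<alpha> (G i) k))\<^sup>2))"
      by (intro sum_mono mult_left_mono Gx) auto
    also have "\<dots> = sr" unfolding sr_def SR SR2 ..
    finally show ?thesis .
  qed
  have Pg: "P g = (\<lambda>k. 0)"
  proof -
    have "P g = (\<lambda>k. \<Sum>i<M. c i * P (G i) k)" unfolding g_def by (rule lin_sum[OF add sc Gl2])
    also have "\<dots> = (\<lambda>k. \<Sum>i<M. c i * (\<Sum>l<n. \<phi> l (G i) * v l k))"
      using rep Gl2 by simp
    also have "\<dots> = (\<lambda>k. \<Sum>l<n. (\<Sum>i<M. c i * \<phi> l (G i)) * v l k)"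
      by (simp add: sum_distrib_left sum_distrib_right sum.swap[of _ "{..<n}"] mult_ac)
    also have "\<dots> = (\<lambda>k. 0)" using c2 unfolding M_def by simp
    finally show ?thesis .
  qed
  define ng where "ng = l2norm g"
  have ng: "ng = sqrt sg" unfolding ng_def l2norm_def sg_def ..
  have ngpos: "ng > 0" unfolding ng using sgpos by simp
  define s where "s = complex_of_real (1 / ng)"
  have ns: "cmod s = 1 / ng" unfolding s_def using ngpos by (simp only: norm_of_real) simp
  define f where "f = (\<lambda>k. s * g k)"
  have fl2: "f \<in> l2" unfolding f_def using l2_scale[OF gl2] by simp
  have f1: "l2norm f = 1" unfolding f_def l2norm_scale[OF gl2] ns ng_def[symmetric] using ngpos by simp
  have diff: "(\<lambda>k. rhaly \<alpha> f k - P f k) = (\<lambda>k. s * rhaly \<alpha> g k)"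
  proof -
    have "P f = (\<lambda>k. s * P g k)" unfolding f_def using bspec[OF sc gl2] by simp
    then show ?thesis unfolding f_def rhaly_scale Pg by simp
  qed
  have "x * ng \<le> l2norm (rhaly \<alpha> g)"
  proof -
    have "x * ng = sqrt (x\<^sup>2 * sg)" unfolding ng using x0 by (simp add: real_sqrt_mult)
    also have "\<dots> \<le> sqrt sr" by (rule real_sqrt_le_mono[OF srx])
    finally show ?thesis unfolding l2norm_def sr_def .
  qed
  then have xle: "x \<le> l2norm (\<lambda>k. s * rhaly \<alpha> g k)"
    unfolding l2norm_scale[OF Rgl2] ns using ngpos by (simp add: field_simps)
  have "y \<le> l2enorm (\<lambda>k. rhaly \<alpha> f k - P f k)"
    unfolding diff yx l2enorm_l2[OF conjunct1[OF l2_scale[OF Rgl2]]] using xle by (rule ennreal_leI)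
  also have "\<dots> \<le> opnorm (\<lambda>f k. rhaly \<alpha> f k - P f k)"
    unfolding opnorm_def by (rule SUP_upper) (use fl2 f1 in auto)
  finally show "y \<le> opnorm (\<lambda>f k. rhaly \<alpha> f k - P f k)" .
qed

lemma ess_lower:
  assumes a: "\<alpha> \<in> l2"
  shows "lim (J \<alpha>) \<le> ess_norm (rhaly \<alpha>)"
  unfolding ess_norm_def by (rule INF_greatest) (use ess_lower_P[OF a] in auto)

lemma l2_diff:
  assumes "f \<in> l2" "g \<in> l2"
  shows "(\<lambda>k. f k - g k) \<in> l2"
proof -
  have "(\<lambda>k. f k + (-1) * g k) \<in> l2" using l2_add[OF assms(1) conjunct1[OF l2_scale[OF assms(2)]]] .
  then show ?thesis by simp
qed

lemma sq_diff_bound: "(cmod (a::complex))\<^sup>2 \<le> 2 * (cmod (a - b))\<^sup>2 + 2 * (cmod b)\<^sup>2"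
proof -
  have "cmod a \<le> cmod (a - b) + cmod b" using norm_triangle_ineq[of "a - b" b] by simp
  then have "(cmod a)\<^sup>2 \<le> (cmod (a - b) + cmod b)\<^sup>2" by (intro power_mono) auto
  also have "\<dots> \<le> 2 * (cmod (a - b))\<^sup>2 + 2 * (cmod b)\<^sup>2" by (rule sq_le2)
  finally show ?thesis .
qed

lemma compact_imp_J0:
  assumes a: "\<alpha> \<in> l2" and cpt: "compact_op (rhaly \<alpha>)"
  shows "lim (J \<alpha>) = 0"
proof (rule ccontr)
  assume ne: "lim (J \<alpha>) \<noteq> 0"
  then have "0 < lim (J \<alpha>)" using not_gr_zero by blast
  then obtain y where y0: "0 < y" and y: "y < lim (J \<alpha>)" using dense by blast
  have yt: "y < top" using less_le_trans[OF y top_greatest] .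
  define x where "x = enn2real y"
  have x0: "x > 0" unfolding x_def using y0 yt by (simp add: enn2real_positive_iff)
  have yx: "y = ennreal x" unfolding x_def using yt by simp
  have xJ: "ennreal x < J \<alpha> a0" for a0 using y lim_le_J[OF a, of a0] yx by simp
  obtain \<beta> G where sm: "strict_mono \<beta>"
    and Gs: "\<And>i k. k < \<beta> i \<or> \<beta> (Suc i) \<le> k \<Longrightarrow> G i k = 0"
    and RGs: "\<And>i k. k < \<beta> i \<or> \<beta> (Suc i) \<le> k \<Longrightarrow> rhaly \<alpha> (G i) k = 0"
    and Gp: "\<And>i. 0 < (\<Sum>k<\<beta> (Suc i). (cmod (G i k))\<^sup>2)"
    and Gx: "\<And>i. x\<^sup>2 * (\<Sum>k<\<beta> (Suc i). (cmod (G i k))\<^sup>2) \<le> (\<Sum>k<\<beta> (Suc i). (cmod (rhaly \<alpha> (G i) k))\<^sup>2)"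
    using blocks_seq[OF a less_imp_le[OF x0] xJ] by metis
  define Ni where "Ni i = (\<Sum>k<\<beta> (Suc i). (cmod (G i k))\<^sup>2)" for i
  have Gl2: "G i \<in> l2" and SGi: "(\<Sum>k. (cmod (G i k))\<^sup>2) = Ni i" for i
    using finsupp_l2[of "\<beta> (Suc i)" "G i"] Gs unfolding Ni_def by auto
  define s where "s i = complex_of_real (1 / sqrt (Ni i))" for i
  have ns: "cmod (s i) = 1 / sqrt (Ni i)" for i
    unfolding s_def using Gp[of i] unfolding Ni_def[symmetric] by (simp only: norm_of_real) simp
  define F where "F i = (\<lambda>k. s i * G i k)" for i
  have Fl2: "F i \<in> l2" for i unfolding F_def using l2_scale[OF Gl2] by simp
  have F1: "l2norm (F i) = 1" for i
    unfolding F_def l2norm_scale[OF Gl2] ns using Gp[of i] unfolding l2norm_def SGi Ni_def[symmetric] by simp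
  have RF: "rhaly \<alpha> (F i) = (\<lambda>k. s i * rhaly \<alpha> (G i) k)" for i unfolding F_def by (rule rhaly_scale)
  have RFs: "rhaly \<alpha> (F i) k = 0" if "k < \<beta> i \<or> \<beta> (Suc i) \<le> k" for i k
    unfolding RF using RGs[OF that] by simp
  have RFl2: "rhaly \<alpha> (F i) \<in> l2" for i using finsupp_l2[of "\<beta> (Suc i)" "rhaly \<alpha> (F i)"] RFs by auto
  have RFx: "x\<^sup>2 \<le> (\<Sum>k\<in>{\<beta> i..<\<beta> (Suc i)}. (cmod (rhaly \<alpha> (F i) k))\<^sup>2)" for i
  proof -
    have "(\<Sum>k\<in>{\<beta> i..<\<beta> (Suc i)}. (cmod (rhaly \<alpha> (F i) k))\<^sup>2) = (\<Sum>k<\<beta> (Suc i). (cmod (rhaly \<alpha> (F i) k))\<^sup>2)"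
      by (rule sum.mono_neutral_left) (auto simp: RFs)
    also have "\<dots> = (cmod (s i))\<^sup>2 * (\<Sum>k<\<beta> (Suc i). (cmod (rhaly \<alpha> (G i) k))\<^sup>2)"
      unfolding RF by (simp add: norm_mult power_mult_distrib sum_distrib_left)
    also have "\<dots> \<ge> (cmod (s i))\<^sup>2 * (x\<^sup>2 * Ni i)"
      unfolding Ni_def by (intro mult_left_mono Gx) auto
    also have "(cmod (s i))\<^sup>2 * (x\<^sup>2 * Ni i) = x\<^sup>2"
      unfolding ns using Gp[of i] unfolding Ni_def[symmetric] by (simp add: power_divide)
    finally show ?thesis by simp
  qed
  have "\<exists>r h. strict_mono r \<and> h \<in> l2 \<and> (\<lambda>n. l2norm (\<lambda>k. rhaly \<alpha> (F (r n)) k - h k)) \<longlonglongrightarrow> 0"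
  proof -
    have c4: "\<forall>fs :: nat \<Rightarrow> nat \<Rightarrow> complex. (\<forall>n. fs n \<in> l2) \<and> (\<exists>C. \<forall>n. l2norm (fs n) \<le> C) \<longrightarrow>
        (\<exists>r g. strict_mono r \<and> g \<in> l2 \<and> (\<lambda>n. l2norm (\<lambda>k. rhaly \<alpha> (fs (r n)) k - g k)) \<longlonglongrightarrow> 0)"
      using cpt[unfolded compact_op_def, THEN conjunct2, THEN conjunct2, THEN conjunct2] .
    have "(\<forall>n. F n \<in> l2) \<and> (\<exists>C. \<forall>n. l2norm (F n) \<le> C)" using Fl2 F1 by auto
    then show ?thesis using spec[OF c4, of F] by blast
  qed
  then obtain r h where r: "strict_mono r" and hl2: "h \<in> l2"
    and lim0: "(\<lambda>n. l2norm (\<lambda>k. rhaly \<alpha> (F (r n)) k - h k)) \<longlonglongrightarrow> 0" by blast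
  have "summable (\<lambda>k. (cmod (h k))\<^sup>2)" using hl2 unfolding l2_def by simp
  from suminf_exist_split[OF _ this, of "x\<^sup>2 / 4"] x0 obtain N0 where
    N0: "\<And>m. m \<ge> N0 \<Longrightarrow> norm (\<Sum>k. (cmod (h (k + m)))\<^sup>2) < x\<^sup>2 / 4" by auto
  have big: "x / 2 \<le> l2norm (\<lambda>k. rhaly \<alpha> (F (r n)) k - h k)" if n: "n \<ge> N0" for n
  proof -
    define i where "i = r n"
    define d where "d = (\<lambda>k. rhaly \<alpha> (F i) k - h k)"
    have dl2: "d \<in> l2" unfolding d_def by (rule l2_diff[OF RFl2 hl2])
    have mi: "\<beta> i \<ge> N0" using seq_suble[OF sm, of i] seq_suble[OF r, of n] n unfolding i_def by linarith
    define W where "W = {\<beta> i..<\<beta> (Suc i)}"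
    have hW: "(\<Sum>k\<in>W. (cmod (h k))\<^sup>2) < x\<^sup>2 / 4"
    proof -
      have "(\<Sum>k\<in>W. (cmod (h k))\<^sup>2) \<le> (\<Sum>k\<in>{\<beta> i..\<beta> (Suc i)}. (cmod (h k))\<^sup>2)"
        unfolding W_def by (rule sum_mono2) auto
      also have "\<dots> \<le> (\<Sum>k. (cmod (h (k + \<beta> i)))\<^sup>2)" by (rule finsum_le_tail[OF hl2])
      also have "\<dots> < x\<^sup>2 / 4" using N0[OF mi] by simp
      finally show ?thesis .
    qed
    have "(\<Sum>k\<in>W. (cmod (rhaly \<alpha> (F i) k))\<^sup>2) \<le> (\<Sum>k\<in>W. 2 * (cmod (d k))\<^sup>2 + 2 * (cmod (h k))\<^sup>2)"
      unfolding d_def by (intro sum_mono sq_diff_bound)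
    also have "\<dots> = 2 * (\<Sum>k\<in>W. (cmod (d k))\<^sup>2) + 2 * (\<Sum>k\<in>W. (cmod (h k))\<^sup>2)"
      by (simp add: sum.distrib sum_distrib_left)
    finally have "x\<^sup>2 \<le> 2 * (\<Sum>k\<in>W. (cmod (d k))\<^sup>2) + 2 * (\<Sum>k\<in>W. (cmod (h k))\<^sup>2)"
      using RFx[of i] unfolding W_def by linarith
    with hW have dW: "x\<^sup>2 / 4 \<le> (\<Sum>k\<in>W. (cmod (d k))\<^sup>2)" by linarith
    also have "\<dots> \<le> (\<Sum>k. (cmod (d k))\<^sup>2)" unfolding W_def by (rule finsum_le_l2[OF dl2]) auto
    finally have "sqrt (x\<^sup>2 / 4) \<le> l2norm d" unfolding l2norm_def by (rule real_sqrt_le_mono)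
    moreover have "sqrt (x\<^sup>2 / 4) = x / 2" using x0 by (simp add: real_sqrt_divide)
    ultimately show ?thesis unfolding d_def i_def by simp
  qed
  from order_tendstoD(2)[OF lim0, of "x / 2"] x0 obtain N1 where
    N1: "\<And>n. n \<ge> N1 \<Longrightarrow> l2norm (\<lambda>k. rhaly \<alpha> (F (r n)) k - h k) < x / 2"
    unfolding eventually_sequentially by auto
  show False using big[of "max N0 N1"] N1[of "max N0 N1"] by simp
qed

lemma coord_le:
  assumes "f \<in> l2" shows "cmod (f j) \<le> l2norm f"
proof -
  have "(cmod (f j))\<^sup>2 \<le> (\<Sum>k. (cmod (f k))\<^sup>2)" using finsum_le_l2[OF assms, of "{j}"] by simp
  then have "sqrt ((cmod (f j))\<^sup>2) \<le> l2norm f" unfolding l2norm_def by (rule real_sqrt_le_mono)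
  then show ?thesis by simp
qed

lemma sq_diff_le2: "(cmod ((a::complex) - b))\<^sup>2 \<le> 2 * (cmod a)\<^sup>2 + 2 * (cmod b)\<^sup>2"
proof -
  have "(cmod (a - b))\<^sup>2 \<le> (cmod a + cmod b)\<^sup>2" by (intro power_mono norm_triangle_ineq4) auto
  also have "\<dots> \<le> 2 * (cmod a)\<^sup>2 + 2 * (cmod b)\<^sup>2" by (rule sq_le2)
  finally show ?thesis .
qed

lemma sq_add_le2: "(cmod ((a::complex) + b))\<^sup>2 \<le> 2 * (cmod a)\<^sup>2 + 2 * (cmod b)\<^sup>2"
proof -
  have "(cmod (a + b))\<^sup>2 \<le> (cmod a + cmod b)\<^sup>2" by (intro power_mono norm_triangle_ineq) auto
  also have "\<dots> \<le> 2 * (cmod a)\<^sup>2 + 2 * (cmod b)\<^sup>2" by (rule sq_le2)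
  finally show ?thesis .
qed

lemma l2_sum2_bound:
  assumes f: "f \<in> l2" and g: "g \<in> l2"
    and pt: "\<And>k. (cmod (d k))\<^sup>2 \<le> 2 * (cmod (f k))\<^sup>2 + 2 * (cmod (g k))\<^sup>2"
  shows "(\<Sum>k. (cmod (d k))\<^sup>2) \<le> 2 * (\<Sum>k. (cmod (f k))\<^sup>2) + 2 * (\<Sum>k. (cmod (g k))\<^sup>2)"
proof -
  have sf: "summable (\<lambda>k. (cmod (f k))\<^sup>2)" and sg: "summable (\<lambda>k. (cmod (g k))\<^sup>2)"
    using f g unfolding l2_def by auto
  have s: "summable (\<lambda>k. 2 * (cmod (f k))\<^sup>2 + 2 * (cmod (g k))\<^sup>2)"
    by (intro summable_add summable_mult sf sg)
  have sd: "summable (\<lambda>k. (cmod (d k))\<^sup>2)"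
    by (rule summable_comparison_test[OF _ s]) (use pt in auto)
  have "(\<Sum>k. (cmod (d k))\<^sup>2) \<le> (\<Sum>k. 2 * (cmod (f k))\<^sup>2 + 2 * (cmod (g k))\<^sup>2)"
    by (rule suminf_le[OF pt sd s])
  also have "\<dots> = 2 * (\<Sum>k. (cmod (f k))\<^sup>2) + 2 * (\<Sum>k. (cmod (g k))\<^sup>2)"
    using sf sg by (simp add: suminf_add[symmetric] suminf_mult)
  finally show ?thesis .
qed

lemma rhaly_l2:
  assumes a: "\<alpha> \<in> l2" and Jf: "J \<alpha> N \<noteq> \<infinity>" and f: "f \<in> l2"
  shows "rhaly \<alpha> f \<in> l2"
proof -
  have "rhaly \<alpha> f = (\<lambda>k. Fop \<alpha> N f k + Hop \<alpha> N f k)" by (rule ext) (rule rhaly_split)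
  then show ?thesis using l2_add[OF conjunct1[OF Fop_l2[OF a f]] conjunct1[OF Hop_bound[OF a Jf f]]] by simp
qed

lemma J0_imp_compact:
  assumes a: "\<alpha> \<in> l2" and J0: "lim (J \<alpha>) = 0"
  shows "compact_op (rhaly \<alpha>)"
proof -
  have Jt: "J \<alpha> \<longlonglongrightarrow> 0" using J_lim(1)[OF a] J0 by simp
  have small: "\<exists>N. J \<alpha> N < ennreal d" if "d > 0" for d
  proof -
    have "eventually (\<lambda>n. J \<alpha> n < ennreal d) sequentially"
      by (rule order_tendstoD(2)[OF Jt]) (use that in simp)
    then show ?thesis unfolding eventually_sequentially by auto
  qed
  obtain N1 where N1: "J \<alpha> N1 < ennreal 1" using small[of 1] by auto
  have N1f: "J \<alpha> N1 \<noteq> \<infinity>" using N1 by auto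
  have Rl2: "rhaly \<alpha> f \<in> l2" if "f \<in> l2" for f by (rule rhaly_l2[OF a N1f that])
  show ?thesis unfolding compact_op_def
  proof (intro conjI ballI allI impI)
    fix f assume "f \<in> l2" then show "rhaly \<alpha> f \<in> l2" by (rule Rl2)
  next
    fix f g :: "nat \<Rightarrow> complex"
    show "rhaly \<alpha> (\<lambda>k. f k + g k) = (\<lambda>k. rhaly \<alpha> f k + rhaly \<alpha> g k)" by (rule rhaly_add)
  next
    fix f :: "nat \<Rightarrow> complex" and c :: complex
    show "rhaly \<alpha> (\<lambda>k. c * f k) = (\<lambda>k. c * rhaly \<alpha> f k)" by (rule rhaly_scale)
  next
    fix fs :: "nat \<Rightarrow> nat \<Rightarrow> complex"
    assume H: "(\<forall>n. fs n \<in> l2) \<and> (\<exists>C. \<forall>n. l2norm (fs n) \<le> C)"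
    then obtain C where fsl2: "\<And>n. fs n \<in> l2" and fsC: "\<And>n. l2norm (fs n) \<le> C" by auto
    have coordC: "cmod (fs n j) \<le> C" for n j using coord_le[OF fsl2] fsC order_trans by blast
    interpret D: subseqs "\<lambda>j s. convergent (\<lambda>i. fs (s i) j)"
    proof
      fix j and s :: "nat \<Rightarrow> nat" assume "strict_mono s"
      have "bounded (range (\<lambda>i. fs (s i) j))" unfolding bounded_iff using coordC by auto
      from bounded_imp_convergent_subsequence[OF this] obtain l r' where
        "strict_mono r'" "((\<lambda>i. fs (s i) j) \<circ> r') \<longlonglongrightarrow> l" by blast
      then show "\<exists>r'. strict_mono r' \<and> convergent (\<lambda>i. fs ((s \<circ> r') i) j)"
        unfolding convergent_def by (auto simp: o_def)
    qed
    define r where "r = D.diagseq"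
    have rsm: "strict_mono r" unfolding r_def by (rule D.subseq_diagseq)
    have conv: "convergent (\<lambda>i. fs (r i) j)" for j
    proof -
      have "convergent (\<lambda>i. fs ((D.diagseq \<circ> (+) (Suc j)) i) j)"
      proof (rule D.diagseq_holds)
        fix r' s n assume "strict_mono (r' :: nat \<Rightarrow> nat)" "convergent (\<lambda>i. fs (s i) n)"
        from convergent_subseq_convergent[OF this(2) this(1)]
        show "convergent (\<lambda>i. fs ((s \<circ> r') i) n)" by (simp add: o_def)
      qed
      then obtain l where "(\<lambda>i. fs (D.diagseq (i + Suc j)) j) \<longlonglongrightarrow> l"
        unfolding convergent_def by (auto simp: o_def add.commute)
      then have "(\<lambda>i. fs (D.diagseq i) j) \<longlonglongrightarrow> l" by (rule LIMSEQ_offset)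
      then show ?thesis unfolding r_def convergent_def by blast
    qed
    define h where "h j = lim (\<lambda>i. fs (r i) j)" for j
    have hlim: "(\<lambda>i. fs (r i) j) \<longlonglongrightarrow> h j" for j
      unfolding h_def using conv convergent_LIMSEQ_iff by blast
    have C0: "C \<ge> 0" using coordC[of 0 0] norm_ge_zero[of "fs 0 0"] by linarith
    have hpart: "(\<Sum>j\<le>N. (cmod (h j))\<^sup>2) \<le> C\<^sup>2" for N
    proof (rule LIMSEQ_le_const2)
      show "(\<lambda>i. \<Sum>j\<le>N. (cmod (fs (r i) j))\<^sup>2) \<longlonglongrightarrow> (\<Sum>j\<le>N. (cmod (h j))\<^sup>2)"
        by (intro tendsto_intros hlim)
      show "\<exists>N0. \<forall>i\<ge>N0. (\<Sum>j\<le>N. (cmod (fs (r i) j))\<^sup>2) \<le> C\<^sup>2"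
      proof (intro exI allI impI)
        fix i
        have "(\<Sum>j\<le>N. (cmod (fs (r i) j))\<^sup>2) \<le> (\<Sum>k. (cmod (fs (r i) k))\<^sup>2)"
          by (rule finsum_le_l2[OF fsl2]) auto
        also have "\<dots> = (l2norm (fs (r i)))\<^sup>2" by (rule l2norm_sq[OF fsl2, symmetric])
        also have "\<dots> \<le> C\<^sup>2" by (intro power_mono fsC) (simp add: l2norm_def l2_sumsq_nonneg[OF fsl2])
        finally show "(\<Sum>j\<le>N. (cmod (fs (r i) j))\<^sup>2) \<le> C\<^sup>2" .
      qed
    qed
    have hl2: "h \<in> l2" and hC: "(\<Sum>k. (cmod (h k))\<^sup>2) \<le> C\<^sup>2"
      using bounded_partials_suminf[of "\<lambda>k. (cmod (h k))\<^sup>2", OF _ hpart] unfolding l2_def by auto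
    define u where "u n = (\<lambda>k. fs (r n) k - h k)" for n
    have ul2: "u n \<in> l2" for n unfolding u_def by (rule l2_diff[OF fsl2 hl2])
    define U where "U = 4 * C\<^sup>2"
    have U0: "U \<ge> 0" unfolding U_def by simp
    have uU: "(\<Sum>k. (cmod (u n k))\<^sup>2) \<le> U" for n
    proof -
      have "(\<Sum>k. (cmod (u n k))\<^sup>2) \<le> 2 * (\<Sum>k. (cmod (fs (r n) k))\<^sup>2) + 2 * (\<Sum>k. (cmod (h k))\<^sup>2)"
        unfolding u_def by (rule l2_sum2_bound[OF fsl2 hl2 sq_diff_le2])
      moreover have "(\<Sum>k. (cmod (fs (r n) k))\<^sup>2) \<le> C\<^sup>2"
      proof -
        have "(\<Sum>k. (cmod (fs (r n) k))\<^sup>2) = (l2norm (fs (r n)))\<^sup>2" by (rule l2norm_sq[OF fsl2, symmetric])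
        also have "\<dots> \<le> C\<^sup>2" by (intro power_mono fsC) (simp add: l2norm_def l2_sumsq_nonneg[OF fsl2])
        finally show ?thesis .
      qed
      ultimately show ?thesis using hC unfolding U_def by linarith
    qed
    have Rdiff: "(\<lambda>k. rhaly \<alpha> (fs (r n)) k - rhaly \<alpha> h k) = rhaly \<alpha> (u n)" for n
      unfolding u_def rhaly_def by (simp add: sum_subtractf right_diff_distrib)
    define A2 where "A2 = (\<Sum>k. (cmod (\<alpha> k))\<^sup>2)"
    have A20: "A2 \<ge> 0" unfolding A2_def by (rule l2_sumsq_nonneg[OF a])
    have main: "(\<lambda>n. l2norm (rhaly \<alpha> (u n))) \<longlonglongrightarrow> 0"
    proof (rule LIMSEQ_I)
      fix \<epsilon> :: real assume e: "0 < \<epsilon>"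
      define \<delta> where "\<delta> = \<epsilon>\<^sup>2 / (16 * (U + 1))"
      have d0: "\<delta> > 0" unfolding \<delta>_def using e U0 by simp
      obtain N where N: "J \<alpha> N < ennreal (sqrt \<delta>)" using small[of "sqrt \<delta>"] d0 by auto
      have Nf: "J \<alpha> N \<noteq> \<infinity>" using N by auto
      define Jr where "Jr = enn2real (J \<alpha> N)"
      have Jr0: "Jr \<ge> 0" unfolding Jr_def by simp
      have "ennreal Jr < ennreal (sqrt \<delta>)" unfolding Jr_def using N Nf by (simp add: top.not_eq_extremum)
      then have "Jr < sqrt \<delta>" using ennreal_less_iff[OF Jr0] by blast
      then have "Jr\<^sup>2 \<le> (sqrt \<delta>)\<^sup>2" using Jr0 by (intro power_mono) auto
      then have Jrd: "Jr\<^sup>2 \<le> \<delta>" using d0 by simp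
      have Hb: "(\<Sum>k. (cmod (Hop \<alpha> N (u n) k))\<^sup>2) \<le> 4 * \<delta> * U" for n
      proof -
        have "(\<Sum>k. (cmod (Hop \<alpha> N (u n) k))\<^sup>2) \<le> 4 * Jr\<^sup>2 * (\<Sum>k. (cmod (u n k))\<^sup>2)"
          using Hop_bound[OF a Nf ul2] unfolding Jr_def by simp
        also have "\<dots> \<le> 4 * \<delta> * U"
          using Jrd uU[of n] l2_sumsq_nonneg[OF ul2[of n]] d0 by (intro mult_mono) auto
        finally show ?thesis .
      qed
      have "(\<lambda>n. (\<Sum>j<N. cmod (u n j))\<^sup>2 * A2) \<longlonglongrightarrow> (\<Sum>j<N. cmod 0)\<^sup>2 * A2"
      proof (intro tendsto_intros)
        fix j
        show "(\<lambda>n. u n j) \<longlonglongrightarrow> 0"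
          unfolding u_def using tendsto_diff[OF hlim[of j] tendsto_const[of "h j"]] by simp
      qed
      then have "(\<lambda>n. (\<Sum>j<N. cmod (u n j))\<^sup>2 * A2) \<longlonglongrightarrow> 0" by simp
      from order_tendstoD(2)[OF this, of "\<epsilon>\<^sup>2 / 4"] e obtain M where
        M: "\<And>n. n \<ge> M \<Longrightarrow> (\<Sum>j<N. cmod (u n j))\<^sup>2 * A2 < \<epsilon>\<^sup>2 / 4"
        unfolding eventually_sequentially by auto
      show "\<exists>no. \<forall>n\<ge>no. norm (l2norm (rhaly \<alpha> (u n)) - 0) < \<epsilon>"
      proof (intro exI allI impI)
        fix n assume n: "n \<ge> M"
        have Fb: "(\<Sum>k. (cmod (Fop \<alpha> N (u n) k))\<^sup>2) < \<epsilon>\<^sup>2 / 4"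
          using Fop_l2[OF a ul2[of n], of N] M[OF n] unfolding A2_def by linarith
        have eq: "rhaly \<alpha> (u n) = (\<lambda>k. Fop \<alpha> N (u n) k + Hop \<alpha> N (u n) k)" by (rule ext) (rule rhaly_split)
        have "(\<Sum>k. (cmod (rhaly \<alpha> (u n) k))\<^sup>2) \<le> 2 * (\<Sum>k. (cmod (Fop \<alpha> N (u n) k))\<^sup>2) + 2 * (\<Sum>k. (cmod (Hop \<alpha> N (u n) k))\<^sup>2)"
          unfolding eq by (rule l2_sum2_bound[OF conjunct1[OF Fop_l2[OF a ul2]] conjunct1[OF Hop_bound[OF a Nf ul2]] sq_add_le2])
        also have "\<dots> < 2 * (\<epsilon>\<^sup>2 / 4) + 2 * (4 * \<delta> * U)" using Fb Hb[of n] by linarith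
        also have "2 * (4 * \<delta> * U) \<le> \<epsilon>\<^sup>2 / 2"
        proof -
          have "8 * \<delta> * U = \<epsilon>\<^sup>2 * U / (2 * (U + 1))" unfolding \<delta>_def using U0 by (simp add: field_simps)
          also have "\<dots> \<le> \<epsilon>\<^sup>2 / 2" using U0 by (simp add: field_simps)
          finally show ?thesis by simp
        qed
        finally have "(\<Sum>k. (cmod (rhaly \<alpha> (u n) k))\<^sup>2) < \<epsilon>\<^sup>2" by simp
        then have "l2norm (rhaly \<alpha> (u n)) < sqrt (\<epsilon>\<^sup>2)" unfolding l2norm_def by (rule real_sqrt_less_mono)
        then have "l2norm (rhaly \<alpha> (u n)) < \<epsilon>" using e by simp
        moreover have "l2norm (rhaly \<alpha> (u n)) \<ge> 0" unfolding l2norm_def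
          using l2_sumsq_nonneg[OF Rl2[OF ul2[of n]]] by simp
        ultimately show "norm (l2norm (rhaly \<alpha> (u n)) - 0) < \<epsilon>" by simp
      qed
    qed
    show "\<exists>r g. strict_mono r \<and> g \<in> l2 \<and> (\<lambda>n. l2norm (\<lambda>k. rhaly \<alpha> (fs (r n)) k - g k)) \<longlonglongrightarrow> 0"
      using rsm Rl2[OF hl2] main unfolding Rdiff[symmetric] by blast
  qed
qed


theorem theorem2p6:
  fixes \<alpha> :: "nat \<Rightarrow> complex"
  assumes "\<alpha> \<in> l2"
  shows "convergent (J \<alpha>)
    \<and> lim (J \<alpha>) \<le> ess_norm (rhaly \<alpha>)
    \<and> ess_norm (rhaly \<alpha>) \<le> ennreal (2 * sqrt 2) * lim (J \<alpha>)
    \<and> (compact_op (rhaly \<alpha>) \<longleftrightarrow> lim (J \<alpha>) = 0)"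
proof (intro conjI)
  show "convergent (J \<alpha>)" by (rule J_lim(3)[OF assms])
  show "lim (J \<alpha>) \<le> ess_norm (rhaly \<alpha>)" by (rule ess_lower[OF assms])
  have "ennreal 2 \<le> ennreal (2 * sqrt 2)"
  proof (rule ennreal_leI)
    have "1 \<le> sqrt (2::real)" by simp
    then show "2 \<le> 2 * sqrt (2::real)" by linarith
  qed
  then have "ennreal 2 * lim (J \<alpha>) \<le> ennreal (2 * sqrt 2) * lim (J \<alpha>)"
    by (rule mult_right_mono) simp
  with ess_upper[OF assms] show "ess_norm (rhaly \<alpha>) \<le> ennreal (2 * sqrt 2) * lim (J \<alpha>)"
    by (rule order_trans)
  show "compact_op (rhaly \<alpha>) \<longleftrightarrow> lim (J \<alpha>) = 0"
    using compact_imp_J0[OF assms] J0_imp_compact[OF assms] by blast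
qed

end
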